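(* Let $\rho>0$ and $\mu_{\mathsf f}\in\mathbb R^n$. Consider the minimum variance steering problem: for the system and affine disturbance feedback policy described in the context, find $\overline{\mathscr U}=\{\bar u(0),\dots,\bar u(T-1)\}$ and $\mathscr K=\{K_{(t,\tau)}:0\le\tau\le t\le T-2\}$ minimizing $J_1(\overline{\mathscr U},\mathscr K):=\mathrm{tr}(\mathrm{var}_x(T))$ subject to $\mathbb E\big[\sum_{t=0}^{T-1}u(t)^\top u(t)\big]-\rho^2\le0$ and $\mu_x(T)=\mu_{\mathsf f}$. This problem is equivalent to the convex program $$\min_{(\bar{\bm u},\bm{\mathcal K})\in\mathscr D}\ \mathcal J_1(\bm{\mathcal K})\quad\text{subject to}\quad (\bar{\bm u},\bm{\mathcal K})\in\mathscr D_1\cap\mathscr D_2,$$ where $\mathcal J_1(\bm{\mathcal K}):=\mathrm{tr}\big(\mathbf P_{T+1}\mathfrak h(\bm{\mathcal K})\mathbf P_{T+1}^\top\big)$ with $\mathfrak h(\bm{\mathcal K}):=\mathbf G_0\Sigma_0\mathbf G_0^\top+(\mathbf G_{\bm w}+\mathbf G_{\bm u}\bm{\mathcal K})\mathbf W(\mathbf G_{\bm w}+\mathbf G_{\bm u}\bm{\mathcal K})^\top$, $\mathscr D_1:=\{(\bar{\bm u},\bm{\mathcal K})\in\mathscr D:\ \bar{\bm u}^\top\bar{\bm u}+\mathrm{tr}(\bm{\mathcal K}\mathbf W\bm{\mathcal K}^\top)-\rho^2\le0\}$ and $\mathscr D_2:=\{(\bar{\bm u},\bm{\mathcal K})\in\mathscr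 D:\ \mathbf P_{T+1}(\mathbf G_{\bm u}\bar{\bm u}+\mathbf G_0\mu_0)-\mu_{\mathsf f}=0\}$, the decision variables being related by $\bar{\bm u}=\mathrm{vertcat}(\overline{\mathscr U})$ and $\bm{\mathcal K}$ built from $\mathscr K$ as in the context.
   Context: System: $x(t+1)=A(t)x(t)+B(t)u(t)+w(t)$, $t\in\{0,\dots,T-1\}$, $x(0)=x_0\sim\mathcal N(\mu_0,\Sigma_0)$ with $\Sigma_0$ symmetric positive definite; $w(0),\dots,w(T-1)$ i.i.d. Gaussian with mean $0$ and covariance $W$ (symmetric positive semidefinite), uncorrelated across time, and $\mathbb E[x_0w(t)^\top]=0$. Policy: $u(0)=\bar u(0)$, $u(t)=\bar u(t)+\sum_{\tau=0}^{t-1}K_{(t-1,\tau)}w(\tau)$ for $t\in\{1,\dots,T-1\}$, $K_{(t-1,\tau)}\in\mathbb R^{m\times n}$. Notation: $\Phi(t,\tau):=A(t-1)\cdots A(\tau)$ ($t>\tau$), $\Phi(t,t)=I$. $\bar{\bm u},\bm w$ are vertical concatenations of $\bar u(0..T-1)$, $w(0..T-1)$. $\mathbf W:=\mathrm{bdiag}(W,\dots,W)$ ($T$ blocks). $\mathbf G_0:=[I;\Phi(1,0);\dots;\Phi(T,0)]$; $\mathbf G_{\bm u}$ (block rows $0..T$, block columns $0..T-1$) has $(i,j)$ block $\Phi(i,j+1)B(j)$ if $i\ge j+1$, else $0$; $\mathbf G_{\bm w}$ has $(i,j)$ block $\Phi(i,j+1)$ if $i\ge j+1$, else $0$. $\bm{\mathcal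 K}:=\begin{bmatrix}0&0\\ \mathbf K&0\end{bmatrix}\in\mathbb R^{Tm\times Tn}$ with $\mathbf K$ block lower triangular having $(i,j)$ block $K_{(i,j)}$, $0\le j\le i\le T-2$; then $\bm u=\bar{\bm u}+\bm{\mathcal K}\bm w$. $\mathscr D$ is the set of all pairs $(\bar{\bm u},\bm{\mathcal K})\in\mathbb R^{Tm}\times\mathbb R^{Tm\times Tn}$ with $\bm{\mathcal K}$ of this structure. $\mathbf P_{T+1}\in\mathbb R^{n\times(T+1)n}$ is zero except for an identity in its last block, so $x(T)=\mathbf P_{T+1}[x(0);\dots;x(T)]$. $\mu_x(T)=\mathbb E[x(T)]$, $\mathrm{var}_x(T)$ its covariance matrix. *)

theory Defs
  imports "HOL-Probability.Probability" "Jordan_Normal_Form.Matrix"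
begin

(* Block indexing: row i of a matrix with row blocks of
   size n belongs to block (i div n), position (i mod n). *)

definition mat_trace :: "real mat \<Rightarrow> real" where
  "mat_trace S = (\<Sum>i<dim_row S. index_mat S (i, i))"

fun PhiK :: "(nat \<Rightarrow> real mat) \<Rightarrow> nat \<Rightarrow> nat \<Rightarrow> nat \<Rightarrow> real mat" where
  "PhiK A n tau 0 = 1\<^sub>m n"
| "PhiK A n tau (Suc k) = A (tau + k) * PhiK A n tau k"

(* Phi(t,tau) = A(t-1)...A(tau) for t > tau, Phi(t,t) = I *)
definition Phi :: "(nat \<Rightarrow> real mat) \<Rightarrow> nat \<Rightarrow> nat \<Rightarrow> nat \<Rightarrow> real mat" where
  "Phi A n t tau = PhiK A n tau (t - tau)"

(* G_0 = [I; Phi(1,0); ...; Phi(T,0)] *)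
definition G0 :: "(nat \<Rightarrow> real mat) \<Rightarrow> nat \<Rightarrow> nat \<Rightarrow> real mat" where
  "G0 A n T = mat ((T+1)*n) n (\<lambda>(i,j). index_mat (Phi A n (i div n) 0) (i mod n, j))"

(* G_u: block (i,j) = Phi(i,j+1) B(j) if i >= j+1, else 0 *)
definition Gu :: "(nat \<Rightarrow> real mat) \<Rightarrow> (nat \<Rightarrow> real mat) \<Rightarrow> nat \<Rightarrow> nat \<Rightarrow> nat \<Rightarrow> real mat" where
  "Gu A B n m T = mat ((T+1)*n) (T*m) (\<lambda>(i,j).
      if j div m + 1 \<le> i div n
      then index_mat (Phi A n (i div n) (j div m + 1) * B (j div m)) (i mod n, j mod m)
      else 0)"

(* G_w: block (i,j) = Phi(i,j+1) if i >= j+1, else 0 *)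
definition Gw :: "(nat \<Rightarrow> real mat) \<Rightarrow> nat \<Rightarrow> nat \<Rightarrow> real mat" where
  "Gw A n T = mat ((T+1)*n) (T*n) (\<lambda>(i,j).
      if j div n + 1 \<le> i div n
      then index_mat (Phi A n (i div n) (j div n + 1)) (i mod n, j mod n)
      else 0)"

(* bold W = bdiag(W,...,W), T blocks *)
definition Wbold :: "real mat \<Rightarrow> nat \<Rightarrow> nat \<Rightarrow> real mat" where
  "Wbold W n T = mat (T*n) (T*n) (\<lambda>(i,j).
      if i div n = j div n then index_mat W (i mod n, j mod n) else 0)"

(* P_{T+1}: n x (T+1)n, zero except an identity in the last block *)
definition Pmat :: "nat \<Rightarrow> nat \<Rightarrow> real mat" where
  "Pmat n T = mat n ((T+1)*n) (\<lambda>(i,j). if j div n = T \<and> j mod n = i then 1 else 0)"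

definition stack_u :: "(nat \<Rightarrow> real vec) \<Rightarrow> nat \<Rightarrow> nat \<Rightarrow> real vec" where
  "stack_u Ubar m T = vec (T*m) (\<lambda>i. vec_index (Ubar (i div m)) (i mod m))"

(* calK = [0 0; Kbold 0], Kbold block lower triangular with (i,j) block K_(i,j),
   0 <= j <= i <= T-2; so block (a,b) of calK is K_(a-1,b) if b < a, else 0 *)
definition stack_K :: "(nat \<Rightarrow> nat \<Rightarrow> real mat) \<Rightarrow> nat \<Rightarrow> nat \<Rightarrow> nat \<Rightarrow> real mat" where
  "stack_K K n m T = mat (T*m) (T*n) (\<lambda>(i,j).
      if j div n < i div m then index_mat (K (i div m - 1) (j div n)) (i mod m, j mod n) else 0)"

definition valid_params :: "nat \<Rightarrow> nat \<Rightarrow> nat \<Rightarrow> (nat \<Rightarrow> real vec) \<Rightarrow> (nat \<Rightarrow> nat \<Rightarrow> real mat) \<Rightarrow> bool" where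
  "valid_params n m T Ubar K \<longleftrightarrow>
     (\<forall>t<T. Ubar t \<in> carrier_vec m) \<and>
     (\<forall>t tau. tau \<le> t \<and> t + 2 \<le> T \<longrightarrow> K t tau \<in> carrier_mat m n)"

definition Dset :: "nat \<Rightarrow> nat \<Rightarrow> nat \<Rightarrow> (real vec \<times> real mat) set" where
  "Dset n m T = {(ub, cK). ub \<in> carrier_vec (T*m) \<and> cK \<in> carrier_mat (T*m) (T*n) \<and>
      (\<forall>i<T*m. \<forall>j<T*n. \<not> (j div n < i div m) \<longrightarrow> index_mat cK (i,j) = 0)}"

definition hfun :: "(nat \<Rightarrow> real mat) \<Rightarrow> (nat \<Rightarrow> real mat) \<Rightarrow> real mat \<Rightarrow> real mat
    \<Rightarrow> nat \<Rightarrow> nat \<Rightarrow> nat \<Rightarrow> real mat \<Rightarrow> real mat" where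
  "hfun A B Sigma0 W n m T cK =
     G0 A n T * Sigma0 * transpose_mat (G0 A n T) +
     (Gw A n T + Gu A B n m T * cK) * Wbold W n T * transpose_mat (Gw A n T + Gu A B n m T * cK)"

definition calJ1 :: "(nat \<Rightarrow> real mat) \<Rightarrow> (nat \<Rightarrow> real mat) \<Rightarrow> real mat \<Rightarrow> real mat
    \<Rightarrow> nat \<Rightarrow> nat \<Rightarrow> nat \<Rightarrow> real mat \<Rightarrow> real" where
  "calJ1 A B Sigma0 W n m T cK =
     mat_trace (Pmat n T * hfun A B Sigma0 W n m T cK * transpose_mat (Pmat n T))"

definition D1set :: "real mat \<Rightarrow> real \<Rightarrow> nat \<Rightarrow> nat \<Rightarrow> nat \<Rightarrow> (real vec \<times> real mat) set" where
  "D1set W rho n m T = {(ub, cK) \<in> Dset n m T.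
      scalar_prod ub ub + mat_trace (cK * Wbold W n T * transpose_mat cK) - rho^2 \<le> 0}"

definition D2set :: "(nat \<Rightarrow> real mat) \<Rightarrow> (nat \<Rightarrow> real mat) \<Rightarrow> real vec \<Rightarrow> real vec
    \<Rightarrow> nat \<Rightarrow> nat \<Rightarrow> nat \<Rightarrow> (real vec \<times> real mat) set" where
  "D2set A B mu0 muf n m T = {(ub, cK) \<in> Dset n m T.
      Pmat n T *\<^sub>v (Gu A B n m T *\<^sub>v ub + G0 A n T *\<^sub>v mu0) - muf = 0\<^sub>v n}"

definition convex_pairs :: "(real vec \<times> real mat) set \<Rightarrow> bool" where
  "convex_pairs S \<longleftrightarrow> (\<forall>p\<in>S. \<forall>q\<in>S. \<forall>th::real. 0 \<le> th \<and> th \<le> 1 \<longrightarrow>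
      (th \<cdot>\<^sub>v fst p + (1 - th) \<cdot>\<^sub>v fst q, th \<cdot>\<^sub>m snd p + (1 - th) \<cdot>\<^sub>m snd q) \<in> S)"

definition convex_obj :: "(real vec \<times> real mat) set \<Rightarrow> (real mat \<Rightarrow> real) \<Rightarrow> bool" where
  "convex_obj S f \<longleftrightarrow> (\<forall>p\<in>S. \<forall>q\<in>S. \<forall>th::real. 0 \<le> th \<and> th \<le> 1 \<longrightarrow>
      f (th \<cdot>\<^sub>m snd p + (1 - th) \<cdot>\<^sub>m snd q) \<le> th * f (snd p) + (1 - th) * f (snd q))"

definition ctrl :: "nat \<Rightarrow> (nat \<Rightarrow> real vec) \<Rightarrow> (nat \<Rightarrow> nat \<Rightarrow> real mat)
    \<Rightarrow> (nat \<Rightarrow> 'a \<Rightarrow> real vec) \<Rightarrow> nat \<Rightarrow> 'a \<Rightarrow> real vec" where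
  "ctrl m Ubar K w t \<omega> = vec m (\<lambda>i. vec_index (Ubar t) i +
       (\<Sum>tau<t. vec_index (K (t - 1) tau *\<^sub>v w tau \<omega>) i))"

fun traj :: "(nat \<Rightarrow> real mat) \<Rightarrow> (nat \<Rightarrow> real mat) \<Rightarrow> nat \<Rightarrow> (nat \<Rightarrow> real vec)
    \<Rightarrow> (nat \<Rightarrow> nat \<Rightarrow> real mat) \<Rightarrow> ('a \<Rightarrow> real vec) \<Rightarrow> (nat \<Rightarrow> 'a \<Rightarrow> real vec)
    \<Rightarrow> nat \<Rightarrow> 'a \<Rightarrow> real vec" where
  "traj A B m Ubar K x0 w 0 \<omega> = x0 \<omega>"
| "traj A B m Ubar K x0 w (Suc t) \<omega> =
     A t *\<^sub>v traj A B m Ubar K x0 w t \<omega> + B t *\<^sub>v ctrl m Ubar K w t \<omega> + w t \<omega>"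

definition mean_vec :: "'a measure \<Rightarrow> nat \<Rightarrow> ('a \<Rightarrow> real vec) \<Rightarrow> real vec" where
  "mean_vec M n X = vec n (\<lambda>i. \<integral>\<omega>. vec_index (X \<omega>) i \<partial>M)"

definition cov_mat :: "'a measure \<Rightarrow> nat \<Rightarrow> ('a \<Rightarrow> real vec) \<Rightarrow> real mat" where
  "cov_mat M n X = mat n n (\<lambda>(i,j). \<integral>\<omega>.
      (vec_index (X \<omega>) i - vec_index (mean_vec M n X) i) *
      (vec_index (X \<omega>) j - vec_index (mean_vec M n X) j) \<partial>M)"

definition cross_mat :: "'a measure \<Rightarrow> nat \<Rightarrow> ('a \<Rightarrow> real vec) \<Rightarrow> ('a \<Rightarrow> real vec) \<Rightarrow> real mat" where
  "cross_mat M n X Y = mat n n (\<lambda>(i,j). \<integral>\<omega>. vec_index (X \<omega>) i * vec_index (Y \<omega>) j \<partial>M)"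

definition sym_posdef :: "nat \<Rightarrow> real mat \<Rightarrow> bool" where
  "sym_posdef n S \<longleftrightarrow> S \<in> carrier_mat n n \<and> transpose_mat S = S \<and>
     (\<forall>v \<in> carrier_vec n. v \<noteq> 0\<^sub>v n \<longrightarrow> scalar_prod v (S *\<^sub>v v) > 0)"

definition sym_psd :: "nat \<Rightarrow> real mat \<Rightarrow> bool" where
  "sym_psd n S \<longleftrightarrow> S \<in> carrier_mat n n \<and> transpose_mat S = S \<and>
     (\<forall>v \<in> carrier_vec n. scalar_prod v (S *\<^sub>v v) \<ge> 0)"

end

theory Submission
  imports Defs
begin


definition L2 :: "'a measure \<Rightarrow> ('a \<Rightarrow> real) \<Rightarrow> bool" where
  "L2 M f \<longleftrightarrow> f \<in> borel_measurable M \<and> integrable M (\<lambda>x. (f x)^2)"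

context prob_space
begin

lemma L2_integrable: "L2 M f \<Longrightarrow> integrable M f"
  unfolding L2_def by (auto intro: square_integrable_imp_integrable)

lemma L2_mult_integrable:
  assumes "L2 M f" "L2 M g" shows "integrable M (\<lambda>x. f x * g x)"
proof -
  have m: "f \<in> borel_measurable M" "g \<in> borel_measurable M"
    and i: "integrable M (\<lambda>x. (f x)^2)" "integrable M (\<lambda>x. (g x)^2)"
    using assms unfolding L2_def by auto
  have "integrable M (\<lambda>x. (f x)^2 + (g x)^2)" using i by auto
  then show ?thesis
  proof (rule Bochner_Integration.integrable_bound)
    show "(\<lambda>x. f x * g x) \<in> borel_measurable M" using m by auto
    show "AE x in M. norm (f x * g x) \<le> norm ((f x)^2 + (g x)^2)"
    proof (intro AE_I2)
      fix x
      have "2 * \<bar>f x * g x\<bar> \<le> (f x)^2 + (g x)^2"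
        using sum_squares_bound[of "\<bar>f x\<bar>" "\<bar>g x\<bar>"] by (simp add: abs_mult)
      moreover have "0 \<le> \<bar>f x\<bar> * \<bar>g x\<bar>" by simp
      ultimately have "\<bar>f x\<bar> * \<bar>g x\<bar> \<le> (f x)^2 + (g x)^2" by linarith
      then show "norm (f x * g x) \<le> norm ((f x)^2 + (g x)^2)"
        by (simp add: abs_mult)
    qed
  qed
qed

lemma L2_const: "L2 M (\<lambda>x. c)"
  unfolding L2_def by auto

lemma L2_add: assumes "L2 M f" "L2 M g" shows "L2 M (\<lambda>x. f x + g x)"
proof -
  have "integrable M (\<lambda>x. (f x)^2 + 2 * (f x * g x) + (g x)^2)"
    using assms L2_mult_integrable[OF assms] unfolding L2_def by auto
  moreover have "(\<lambda>x. (f x + g x)^2) = (\<lambda>x. (f x)^2 + 2 * (f x * g x) + (g x)^2)"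
    by (auto simp: fun_eq_iff power2_eq_square algebra_simps)
  moreover have "(\<lambda>x. f x + g x) \<in> borel_measurable M" using assms unfolding L2_def by auto
  ultimately show ?thesis unfolding L2_def by simp
qed

lemma L2_cmult: assumes "L2 M f" shows "L2 M (\<lambda>x. c * f x)"
proof -
  have [measurable]: "f \<in> borel_measurable M" using assms unfolding L2_def by auto
  have "(\<lambda>x. c * f x) \<in> borel_measurable M" by measurable
  then show ?thesis using assms unfolding L2_def by (simp add: power_mult_distrib)
qed

lemma L2_diff: assumes "L2 M f" "L2 M g" shows "L2 M (\<lambda>x. f x - g x)"
  using L2_add[OF assms(1) L2_cmult[OF assms(2), of "-1"]] by simp

lemma L2_sum: "(\<And>i. i \<in> S \<Longrightarrow> L2 M (f i)) \<Longrightarrow> L2 M (\<lambda>x. \<Sum>i\<in>S. f i x)"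
proof (induction S rule: infinite_finite_induct)
  case (infinite S) then show ?case by (simp add: L2_const)
next
  case empty then show ?case by (simp add: L2_const)
next
  case (insert a S) then show ?case by (simp add: L2_add)
qed

lemma integral_bilin:
  assumes "finite A" "finite B" "\<And>a. a \<in> A \<Longrightarrow> L2 M (f a)" "\<And>b. b \<in> B \<Longrightarrow> L2 M (g b)"
  shows "(\<integral>x. (\<Sum>a\<in>A. \<alpha> a * f a x) * (\<Sum>b\<in>B. \<beta> b * g b x) \<partial>M)
       = (\<Sum>a\<in>A. \<Sum>b\<in>B. \<alpha> a * \<beta> b * (\<integral>x. f a x * g b x \<partial>M))"
proof -
  have "(\<integral>x. (\<Sum>a\<in>A. \<alpha> a * f a x) * (\<Sum>b\<in>B. \<beta> b * g b x) \<partial>M)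
      = (\<integral>x. (\<Sum>a\<in>A. \<Sum>b\<in>B. (\<alpha> a * \<beta> b) * (f a x * g b x)) \<partial>M)"
    by (simp add: sum_product mult_ac)
  also have "\<dots> = (\<Sum>a\<in>A. (\<integral>x. (\<Sum>b\<in>B. (\<alpha> a * \<beta> b) * (f a x * g b x)) \<partial>M))"
    using assms L2_mult_integrable by (intro Bochner_Integration.integral_sum) auto
  also have "\<dots> = (\<Sum>a\<in>A. \<Sum>b\<in>B. (\<integral>x. (\<alpha> a * \<beta> b) * (f a x * g b x) \<partial>M))"
    using assms L2_mult_integrable by (intro sum.cong refl Bochner_Integration.integral_sum) auto
  also have "\<dots> = (\<Sum>a\<in>A. \<Sum>b\<in>B. \<alpha> a * \<beta> b * (\<integral>x. f a x * g b x \<partial>M))"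
    by simp
  finally show ?thesis .
qed

end

lemma mv_comp: "(A::real mat) \<in> carrier_mat n N \<Longrightarrow> v \<in> carrier_vec N \<Longrightarrow> i < n \<Longrightarrow>
   (A *\<^sub>v v) $ i = (\<Sum>k<N. A $$ (i,k) * v $ k)"
  by (auto simp: scalar_prod_def lessThan_atLeast0 intro!: sum.cong)

lemma mat_quad_comp: "(A::real mat) \<in> carrier_mat n N \<Longrightarrow> S \<in> carrier_mat N N \<Longrightarrow> i < n \<Longrightarrow> j < n \<Longrightarrow>
   (A * S * transpose_mat A) $$ (i,j) = (\<Sum>k<N. \<Sum>l<N. A $$ (i,k) * A $$ (j,l) * S $$ (k,l))"
  apply (simp add: scalar_prod_def lessThan_atLeast0 sum_distrib_left sum_distrib_right)
  apply (auto intro!: sum.cong simp: algebra_simps)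
  done


lemma L2_cong: "(\<And>x. x \<in> space M \<Longrightarrow> f x = g x) \<Longrightarrow> L2 M f = L2 M g"
  unfolding L2_def
  by (metis (no_types, lifting) Bochner_Integration.integrable_cong measurable_cong)

lemma (in prob_space) affine_moments:
  fixes Z1 Z2 X :: "'a \<Rightarrow> real vec"
  assumes Z1d: "\<And>\<omega>. \<omega> \<in> space M \<Longrightarrow> Z1 \<omega> \<in> carrier_vec N1"
    and Z2d: "\<And>\<omega>. \<omega> \<in> space M \<Longrightarrow> Z2 \<omega> \<in> carrier_vec N2"
    and Z1L: "\<And>k. k < N1 \<Longrightarrow> L2 M (\<lambda>\<omega>. Z1 \<omega> $ k)"
    and Z2L: "\<And>k. k < N2 \<Longrightarrow> L2 M (\<lambda>\<omega>. Z2 \<omega> $ k)"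
    and m1: "mean_vec M N1 Z1 = mu1" and m2: "mean_vec M N2 Z2 = mu2"
    and c1: "cov_mat M N1 Z1 = S1" and c2: "cov_mat M N2 Z2 = S2"
    and cr: "\<And>k l. k < N1 \<Longrightarrow> l < N2 \<Longrightarrow>
               (\<integral>\<omega>. (Z1 \<omega> $ k - mu1 $ k) * (Z2 \<omega> $ l - mu2 $ l) \<partial>M) = 0"
    and L1: "L1 \<in> carrier_mat n N1" and L2m: "L2m \<in> carrier_mat n N2" and d: "d \<in> carrier_vec n"
    and X: "\<And>\<omega>. \<omega> \<in> space M \<Longrightarrow> X \<omega> = d + L1 *\<^sub>v Z1 \<omega> + L2m *\<^sub>v Z2 \<omega>"
  shows "mean_vec M n X = d + L1 *\<^sub>v mu1 + L2m *\<^sub>v mu2"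
    and "cov_mat M n X = L1 * S1 * transpose_mat L1 + L2m * S2 * transpose_mat L2m"
    and "\<And>i. i < n \<Longrightarrow> L2 M (\<lambda>\<omega>. X \<omega> $ i)"
proof -
  have mu1: "mu1 \<in> carrier_vec N1" "\<And>k. k < N1 \<Longrightarrow> mu1 $ k = (\<integral>\<omega>. Z1 \<omega> $ k \<partial>M)"
    using m1[symmetric] unfolding mean_vec_def by auto
  have mu2: "mu2 \<in> carrier_vec N2" "\<And>k. k < N2 \<Longrightarrow> mu2 $ k = (\<integral>\<omega>. Z2 \<omega> $ k \<partial>M)"
    using m2[symmetric] unfolding mean_vec_def by auto
  have S1: "S1 \<in> carrier_mat N1 N1" "\<And>k l. k < N1 \<Longrightarrow> l < N1 \<Longrightarrow>
      S1 $$ (k,l) = (\<integral>\<omega>. (Z1 \<omega> $ k - mu1 $ k) * (Z1 \<omega> $ l - mu1 $ l) \<partial>M)"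
    using c1[symmetric] m1 unfolding cov_mat_def by auto
  have S2: "S2 \<in> carrier_mat N2 N2" "\<And>k l. k < N2 \<Longrightarrow> l < N2 \<Longrightarrow>
      S2 $$ (k,l) = (\<integral>\<omega>. (Z2 \<omega> $ k - mu2 $ k) * (Z2 \<omega> $ l - mu2 $ l) \<partial>M)"
    using c2[symmetric] m2 unfolding cov_mat_def by auto
  define e where "e = d + L1 *\<^sub>v mu1 + L2m *\<^sub>v mu2"
  have e: "e \<in> carrier_vec n" unfolding e_def using d L1 L2m mu1 mu2 by auto
  define c1 where "c1 k \<omega> = Z1 \<omega> $ k - mu1 $ k" for k \<omega>
  define c2 where "c2 k \<omega> = Z2 \<omega> $ k - mu2 $ k" for k \<omega>
  define P where "P i \<omega> = (\<Sum>k<N1. L1 $$ (i,k) * c1 k \<omega>)" for i \<omega>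
  define Q where "Q i \<omega> = (\<Sum>k<N2. L2m $$ (i,k) * c2 k \<omega>)" for i \<omega>
  have c1L: "\<And>k. k < N1 \<Longrightarrow> L2 M (c1 k)" unfolding c1_def
    using Z1L by (intro L2_diff L2_const) auto
  have c2L: "\<And>k. k < N2 \<Longrightarrow> L2 M (c2 k)" unfolding c2_def
    using Z2L by (intro L2_diff L2_const) auto
  have PL: "L2 M (P i)" for i unfolding P_def using c1L by (intro L2_sum L2_cmult) auto
  have QL: "L2 M (Q i)" for i unfolding Q_def using c2L by (intro L2_sum L2_cmult) auto
  have c1I: "(\<integral>\<omega>. c1 k \<omega> \<partial>M) = 0" if "k < N1" for k
    unfolding c1_def using that mu1 Z1L L2_integrable by (simp add: prob_space)
  have c2I: "(\<integral>\<omega>. c2 k \<omega> \<partial>M) = 0" if "k < N2" for k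
    unfolding c2_def using that mu2 Z2L L2_integrable by (simp add: prob_space)
  have PI: "(\<integral>\<omega>. P i \<omega> \<partial>M) = 0" for i
    unfolding P_def using c1L L2_integrable c1I by (subst Bochner_Integration.integral_sum) auto
  have QI: "(\<integral>\<omega>. Q i \<omega> \<partial>M) = 0" for i
    unfolding Q_def using c2L L2_integrable c2I by (subst Bochner_Integration.integral_sum) auto
  have Xc: "X \<omega> $ i = e $ i + P i \<omega> + Q i \<omega>" if "\<omega> \<in> space M" "i < n" for \<omega> i
  proof -
    have "X \<omega> $ i = d $ i + (L1 *\<^sub>v Z1 \<omega>) $ i + (L2m *\<^sub>v Z2 \<omega>) $ i"
      using X[OF that(1)] that Z1d[OF that(1)] Z2d[OF that(1)] L1 L2m d by simp
    also have "\<dots> = d $ i + (\<Sum>k<N1. L1 $$ (i,k) * Z1 \<omega> $ k) + (\<Sum>k<N2. L2m $$ (i,k) * Z2 \<omega> $ k)"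
      by (simp only: mv_comp[OF L1 Z1d[OF that(1)] that(2)] mv_comp[OF L2m Z2d[OF that(1)] that(2)])
    finally have 1: "X \<omega> $ i = d $ i + (\<Sum>k<N1. L1 $$ (i,k) * Z1 \<omega> $ k) + (\<Sum>k<N2. L2m $$ (i,k) * Z2 \<omega> $ k)" .
    have "e $ i = d $ i + (L1 *\<^sub>v mu1) $ i + (L2m *\<^sub>v mu2) $ i"
      unfolding e_def using that mu1 mu2 L1 L2m d by simp
    also have "\<dots> = d $ i + (\<Sum>k<N1. L1 $$ (i,k) * mu1 $ k) + (\<Sum>k<N2. L2m $$ (i,k) * mu2 $ k)"
      by (simp only: mv_comp[OF L1 mu1(1) that(2)] mv_comp[OF L2m mu2(1) that(2)])
    finally have 2: "e $ i = d $ i + (\<Sum>k<N1. L1 $$ (i,k) * mu1 $ k) + (\<Sum>k<N2. L2m $$ (i,k) * mu2 $ k)" .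
    from 1 2
    show ?thesis
      unfolding P_def Q_def c1_def c2_def by (simp add: right_diff_distrib sum_subtractf)
  qed
  show XL: "L2 M (\<lambda>\<omega>. X \<omega> $ i)" if "i < n" for i
  proof -
    have "L2 M (\<lambda>\<omega>. e $ i + P i \<omega> + Q i \<omega>)" using PL QL by (intro L2_add L2_const) auto
    then show ?thesis using Xc that L2_cong[of M "\<lambda>\<omega>. X \<omega> $ i"] by auto
  qed
  have meanX: "(\<integral>\<omega>. X \<omega> $ i \<partial>M) = e $ i" if "i < n" for i
  proof -
    have "(\<integral>\<omega>. X \<omega> $ i \<partial>M) = (\<integral>\<omega>. e $ i + P i \<omega> + Q i \<omega> \<partial>M)"
      using Xc that by (intro Bochner_Integration.integral_cong) auto
    also have "\<dots> = e $ i" using PL QL L2_integrable PI QI by (simp add: prob_space)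
    finally show ?thesis .
  qed
  show mX: "mean_vec M n X = e" unfolding e_def[symmetric]
    using meanX e by (intro eq_vecI) (auto simp: mean_vec_def)
  show "cov_mat M n X = L1 * S1 * transpose_mat L1 + L2m * S2 * transpose_mat L2m"
  proof (rule eq_matI)
    fix i j assume ij: "i < dim_row (L1 * S1 * transpose_mat L1 + L2m * S2 * transpose_mat L2m)"
      "j < dim_col (L1 * S1 * transpose_mat L1 + L2m * S2 * transpose_mat L2m)"
    then have i: "i < n" and j: "j < n" using L1 L2m by auto
    have "cov_mat M n X $$ (i,j) = (\<integral>\<omega>. (P i \<omega> + Q i \<omega>) * (P j \<omega> + Q j \<omega>) \<partial>M)"
      unfolding cov_mat_def mX using i j Xc
      by (auto intro!: Bochner_Integration.integral_cong)
    also have "\<dots> = (\<integral>\<omega>. P i \<omega> * P j \<omega> + P i \<omega> * Q j \<omega> + (Q i \<omega> * P j \<omega> + Q i \<omega> * Q j \<omega>) \<partial>M)"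
      by (simp add: algebra_simps)
    also have "\<dots> = (\<integral>\<omega>. P i \<omega> * P j \<omega> \<partial>M) + (\<integral>\<omega>. P i \<omega> * Q j \<omega> \<partial>M)
       + ((\<integral>\<omega>. Q i \<omega> * P j \<omega> \<partial>M) + (\<integral>\<omega>. Q i \<omega> * Q j \<omega> \<partial>M))"
      using L2_mult_integrable PL QL by simp
    also have "(\<integral>\<omega>. P i \<omega> * P j \<omega> \<partial>M) = (L1 * S1 * transpose_mat L1) $$ (i,j)"
      unfolding P_def using c1L i j L1 S1
      by (subst mat_quad_comp[OF L1 S1(1) i j], subst integral_bilin) (auto simp: c1_def intro!: sum.cong)
    also have "(\<integral>\<omega>. Q i \<omega> * Q j \<omega> \<partial>M) = (L2m * S2 * transpose_mat L2m) $$ (i,j)"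
      unfolding Q_def using c2L i j L2m S2
      by (subst mat_quad_comp[OF L2m S2(1) i j], subst integral_bilin) (auto simp: c2_def intro!: sum.cong)
    also have "(\<integral>\<omega>. P i \<omega> * Q j \<omega> \<partial>M) = 0"
      unfolding P_def Q_def using c1L c2L cr
      by (subst integral_bilin) (auto simp: c1_def c2_def)
    also have "(\<integral>\<omega>. Q i \<omega> * P j \<omega> \<partial>M) = 0"
      unfolding P_def Q_def using c1L c2L cr
      by (subst integral_bilin) (auto simp: c1_def c2_def mult.commute)
    finally show "cov_mat M n X $$ (i,j) = (L1 * S1 * transpose_mat L1 + L2m * S2 * transpose_mat L2m) $$ (i,j)"
      using i j L1 L2m S1 S2 by simp
  qed (use L1 L2m in \<open>auto simp: cov_mat_def\<close>)
qed


section \<open>Block sums\<close>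

lemma blocksum: fixes f :: "nat \<Rightarrow> 'b::comm_monoid_add"
  shows "(\<Sum>q<T*m. f q) = (\<Sum>j<T. \<Sum>c<m. f (j*m + c))"
proof (induction T)
  case 0 then show ?case by simp
next
  case (Suc T)
  have u: "{..<Suc T * m} = {..<T*m} \<union> {T*m..<T*m+m}" by auto
  have "(\<Sum>q<Suc T * m. f q) = (\<Sum>q<T*m. f q) + (\<Sum>q\<in>{T*m..<T*m+m}. f q)"
    unfolding u by (subst sum.union_disjoint) auto
  also have "(\<Sum>q\<in>{T*m..<T*m+m}. f q) = (\<Sum>c<m. f (T*m+c))"
    using sum.shift_bounds_nat_ivl[of f 0 "T*m" m]
    by (simp add: atLeast0LessThan add.commute)
  finally show ?case using Suc by simp
qed

lemma divmod_blk[simp]: "c < (m::nat) \<Longrightarrow> (j*m + c) div m = j" "c < (m::nat) \<Longrightarrow> (j*m + c) mod m = c"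
  by auto

section \<open>State transition matrices\<close>

lemma PhiK_carrier: "(\<And>k. s \<le> k \<Longrightarrow> k < s + K \<Longrightarrow> A k \<in> carrier_mat n n) \<Longrightarrow> PhiK A n s K \<in> carrier_mat n n"
  by (induction K) (auto intro!: mult_carrier_mat)

lemma Phi_carrier: "(\<And>k. s \<le> k \<Longrightarrow> k < t \<Longrightarrow> A k \<in> carrier_mat n n) \<Longrightarrow> Phi A n t s \<in> carrier_mat n n"
  unfolding Phi_def by (rule PhiK_carrier) auto

lemma Phi_Suc: "s \<le> t \<Longrightarrow> Phi A n (Suc t) s = A t * Phi A n t s"
  unfolding Phi_def by (simp add: Suc_diff_le)

lemma Phi_refl: "Phi A n t t = 1\<^sub>m n"
  unfolding Phi_def by simp

lemma mv_sum:
  assumes "(A::real mat) \<in> carrier_mat r n" "\<And>j. j \<in> J \<Longrightarrow> y j \<in> carrier_vec n" "i < r"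
  shows "(A *\<^sub>v vec n (\<lambda>k. \<Sum>j\<in>J. y j $ k)) $ i = (\<Sum>j\<in>J. (A *\<^sub>v y j) $ i)"
proof -
  have "(A *\<^sub>v vec n (\<lambda>k. \<Sum>j\<in>J. y j $ k)) $ i = (\<Sum>k<n. A $$ (i,k) * (\<Sum>j\<in>J. y j $ k))"
    using assms by (subst mv_comp[of _ r n]) auto
  also have "\<dots> = (\<Sum>j\<in>J. \<Sum>k<n. A $$ (i,k) * y j $ k)"
    by (simp add: sum_distrib_left sum.swap[of _ J])
  also have "\<dots> = (\<Sum>j\<in>J. (A *\<^sub>v y j) $ i)"
    using assms by (intro sum.cong refl, subst mv_comp[of _ r n]) auto
  finally show ?thesis .
qed

lemma traj_closed:
  assumes AB: "\<And>t. t < T \<Longrightarrow> A t \<in> carrier_mat n n \<and> B t \<in> carrier_mat n m"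
    and xid: "xi \<omega> \<in> carrier_vec n"
    and wd: "\<And>t. t < T \<Longrightarrow> w t \<omega> \<in> carrier_vec n"
  shows "t \<le> T \<Longrightarrow> traj A B m Ubar K xi w t \<omega> = vec n (\<lambda>i. (Phi A n t 0 *\<^sub>v xi \<omega>) $ i +
      (\<Sum>j<t. (Phi A n t (Suc j) *\<^sub>v (B j *\<^sub>v ctrl m Ubar K w j \<omega> + w j \<omega>)) $ i))"
proof (induction t)
  case 0
  show ?case using xid by (intro eq_vecI) (auto simp: Phi_refl)
next
  case (Suc t)
  define v where "v j = B j *\<^sub>v ctrl m Ubar K w j \<omega> + w j \<omega>" for j
  have vd: "v j \<in> carrier_vec n" if "j < T" for j
    unfolding v_def using AB[OF that] wd[OF that] by (auto simp: ctrl_def)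
  have t: "t < T" using Suc by auto
  have At: "A t \<in> carrier_mat n n" using AB t by auto
  have Pc: "Phi A n t s \<in> carrier_mat n n" for s using AB t by (intro Phi_carrier) auto
  have IH: "traj A B m Ubar K xi w t \<omega> = vec n (\<lambda>i. (Phi A n t 0 *\<^sub>v xi \<omega>) $ i +
      (\<Sum>j<t. (Phi A n t (Suc j) *\<^sub>v v j) $ i))"
    using Suc unfolding v_def by simp
  have C: "traj A B m Ubar K xi w t \<omega> = Phi A n t 0 *\<^sub>v xi \<omega> + vec n (\<lambda>i. \<Sum>j<t. (Phi A n t (Suc j) *\<^sub>v v j) $ i)"
    unfolding IH using Pc xid by (intro eq_vecI) auto
  show ?case
  proof (rule eq_vecI)
    fix i assume "i < dim_vec (vec n (\<lambda>i. (Phi A n (Suc t) 0 *\<^sub>v xi \<omega>) $ i +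
      (\<Sum>j<Suc t. (Phi A n (Suc t) (Suc j) *\<^sub>v (B j *\<^sub>v ctrl m Ubar K w j \<omega> + w j \<omega>)) $ i)))"
    then have i: "i < n" by simp
    have trd: "traj A B m Ubar K xi w t \<omega> \<in> carrier_vec n" unfolding C using Pc[of 0] xid by (metis add_carrier_vec mult_mat_vec_carrier vec_carrier)
    have "traj A B m Ubar K xi w (Suc t) \<omega> $ i = (A t *\<^sub>v traj A B m Ubar K xi w t \<omega>) $ i + v t $ i"
      using i At conjunct2[OF AB[OF t]] wd[OF t] trd unfolding v_def by simp
    also have "(A t *\<^sub>v traj A B m Ubar K xi w t \<omega>) $ i
       = (A t *\<^sub>v (Phi A n t 0 *\<^sub>v xi \<omega>)) $ i + (A t *\<^sub>v vec n (\<lambda>i. \<Sum>j<t. (Phi A n t (Suc j) *\<^sub>v v j) $ i)) $ i"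
      unfolding C using At Pc xid i by (subst mult_add_distrib_mat_vec[of _ n n]) (auto intro!: mult_mat_vec_carrier)
    also have "(A t *\<^sub>v vec n (\<lambda>i. \<Sum>j<t. (Phi A n t (Suc j) *\<^sub>v v j) $ i)) $ i
       = (\<Sum>j<t. (A t *\<^sub>v (Phi A n t (Suc j) *\<^sub>v v j)) $ i)"
      using At Pc vd t i by (intro mv_sum) (auto intro!: mult_mat_vec_carrier)
    also have "\<dots> = (\<Sum>j<t. (Phi A n (Suc t) (Suc j) *\<^sub>v v j) $ i)"
      using At Pc vd t by (intro sum.cong refl) (simp add: Phi_Suc assoc_mult_mat_vec[of _ n n _ n])
    also have "(A t *\<^sub>v (Phi A n t 0 *\<^sub>v xi \<omega>)) = Phi A n (Suc t) 0 *\<^sub>v xi \<omega>"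
      using At Pc xid by (simp add: Phi_Suc assoc_mult_mat_vec[of _ n n _ n])
    also have "v t $ i = (Phi A n (Suc t) (Suc t) *\<^sub>v v t) $ i"
      using vd[OF t] i by (simp add: Phi_refl)
    finally show "traj A B m Ubar K xi w (Suc t) \<omega> $ i = vec n (\<lambda>i. (Phi A n (Suc t) 0 *\<^sub>v xi \<omega>) $ i +
      (\<Sum>j<Suc t. (Phi A n (Suc t) (Suc j) *\<^sub>v (B j *\<^sub>v ctrl m Ubar K w j \<omega> + w j \<omega>)) $ i)) $ i"
      using i unfolding v_def by simp
  qed (use wd[OF \<open>t < T\<close>] in simp)
qed



lemma blk_less[simp]: "j < T \<Longrightarrow> c < (m::nat) \<Longrightarrow> j*m + c < T*m"
proof -
  assume "j < T" "c < m"
  then have "j*m + c < j*m + m" by simp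
  also have "\<dots> = Suc j * m" by simp
  also have "\<dots> \<le> T * m" using \<open>j < T\<close> by (intro mult_le_mono1) simp
  finally show ?thesis .
qed

lemma sum_if_less: "t \<le> (T::nat) \<Longrightarrow> (\<Sum>j<T. if j < t then f j else 0) = (\<Sum>j<t. f j)"
proof -
  assume "t \<le> T"
  then have "{..<T} \<inter> {j. j < t} = {..<t}" by auto
  then show ?thesis using sum.inter_restrict[of "{..<T}" f "{j. j < t}"] by simp
qed

lemma G0_mv:
  assumes AB: "\<And>k. k < t \<Longrightarrow> A k \<in> carrier_mat n n" and t: "t \<le> T" and i: "i < n"
    and x: "x \<in> carrier_vec n"
  shows "(G0 A n T *\<^sub>v x) $ (t*n+i) = (Phi A n t 0 *\<^sub>v x) $ i"
proof -
  have G: "G0 A n T \<in> carrier_mat ((T+1)*n) n" unfolding G0_def by simp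
  have P: "Phi A n t 0 \<in> carrier_mat n n" using AB by (intro Phi_carrier) auto
  have r: "t*n+i < (T+1)*n" using t i blk_less[of t "T+1" i n] by simp
  have "(G0 A n T *\<^sub>v x) $ (t*n+i) = (\<Sum>k<n. G0 A n T $$ (t*n+i,k) * x $ k)"
    by (rule mv_comp[OF G x r])
  also have "\<dots> = (\<Sum>k<n. Phi A n t 0 $$ (i,k) * x $ k)"
    using i r by (auto simp: G0_def intro!: sum.cong)
  also have "\<dots> = (Phi A n t 0 *\<^sub>v x) $ i" by (rule mv_comp[OF P x i, symmetric])
  finally show ?thesis .
qed

lemma Gu_mv:
  assumes AB: "\<And>k. k < T \<Longrightarrow> A k \<in> carrier_mat n n \<and> B k \<in> carrier_mat n m"
    and t: "t \<le> T" and i: "i < n" and u: "u \<in> carrier_vec (T*m)"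
  shows "(Gu A B n m T *\<^sub>v u) $ (t*n+i) = (\<Sum>j<t. (Phi A n t (Suc j) *\<^sub>v (B j *\<^sub>v vec m (\<lambda>c. u $ (j*m+c)))) $ i)"
proof -
  have G: "Gu A B n m T \<in> carrier_mat ((T+1)*n) (T*m)" unfolding Gu_def by simp
  have r: "t*n+i < (T+1)*n" using t i blk_less[of t "T+1" i n] by simp
  have "(Gu A B n m T *\<^sub>v u) $ (t*n+i) = (\<Sum>q<T*m. Gu A B n m T $$ (t*n+i, q) * u $ q)"
    by (rule mv_comp[OF G u r])
  also have "\<dots> = (\<Sum>j<T. \<Sum>c<m. Gu A B n m T $$ (t*n+i, j*m+c) * u $ (j*m+c))"
    by (rule blocksum)
  also have "\<dots> = (\<Sum>j<T. if j < t then ((Phi A n t (Suc j) * B j) *\<^sub>v vec m (\<lambda>c. u $ (j*m+c))) $ i else 0)"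
  proof (intro sum.cong refl)
    fix j assume j: "j \<in> {..<T}"
    have PB: "Phi A n t (Suc j) * B j \<in> carrier_mat n m"
      using AB j t by (intro mult_carrier_mat[of _ n n] Phi_carrier) auto
    show "(\<Sum>c<m. Gu A B n m T $$ (t*n+i, j*m+c) * u $ (j*m+c)) =
      (if j < t then ((Phi A n t (Suc j) * B j) *\<^sub>v vec m (\<lambda>c. u $ (j*m+c))) $ i else 0)"
      using i r j by (auto simp: mv_comp[OF PB _ i] Gu_def intro!: sum.cong)
  qed
  also have "\<dots> = (\<Sum>j<t. ((Phi A n t (Suc j) * B j) *\<^sub>v vec m (\<lambda>c. u $ (j*m+c))) $ i)"
    using t by (rule sum_if_less)
  also have "\<dots> = (\<Sum>j<t. (Phi A n t (Suc j) *\<^sub>v (B j *\<^sub>v vec m (\<lambda>c. u $ (j*m+c)))) $ i)"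
  proof (intro sum.cong refl)
    fix j assume j: "j \<in> {..<t}"
    have "Phi A n t (Suc j) \<in> carrier_mat n n" using AB j t by (intro Phi_carrier) auto
    then show "((Phi A n t (Suc j) * B j) *\<^sub>v vec m (\<lambda>c. u $ (j*m+c))) $ i =
        (Phi A n t (Suc j) *\<^sub>v (B j *\<^sub>v vec m (\<lambda>c. u $ (j*m+c)))) $ i"
      using AB j t by (subst assoc_mult_mat_vec[of _ n n _ m]) auto
  qed
  finally show ?thesis .
qed

lemma Gw_mv:
  assumes AB: "\<And>k. k < T \<Longrightarrow> A k \<in> carrier_mat n n"
    and t: "t \<le> T" and i: "i < n" and u: "u \<in> carrier_vec (T*n)"
  shows "(Gw A n T *\<^sub>v u) $ (t*n+i) = (\<Sum>j<t. (Phi A n t (Suc j) *\<^sub>v vec n (\<lambda>c. u $ (j*n+c))) $ i)"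
proof -
  have G: "Gw A n T \<in> carrier_mat ((T+1)*n) (T*n)" unfolding Gw_def by simp
  have r: "t*n+i < (T+1)*n" using t i blk_less[of t "T+1" i n] by simp
  have "(Gw A n T *\<^sub>v u) $ (t*n+i) = (\<Sum>q<T*n. Gw A n T $$ (t*n+i, q) * u $ q)"
    by (rule mv_comp[OF G u r])
  also have "\<dots> = (\<Sum>j<T. \<Sum>c<n. Gw A n T $$ (t*n+i, j*n+c) * u $ (j*n+c))"
    by (rule blocksum)
  also have "\<dots> = (\<Sum>j<T. if j < t then (Phi A n t (Suc j) *\<^sub>v vec n (\<lambda>c. u $ (j*n+c))) $ i else 0)"
  proof (intro sum.cong refl)
    fix j assume j: "j \<in> {..<T}"
    have PB: "Phi A n t (Suc j) \<in> carrier_mat n n"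
      using AB j t by (intro Phi_carrier) auto
    show "(\<Sum>c<n. Gw A n T $$ (t*n+i, j*n+c) * u $ (j*n+c)) =
      (if j < t then (Phi A n t (Suc j) *\<^sub>v vec n (\<lambda>c. u $ (j*n+c))) $ i else 0)"
      using i r j by (auto simp: mv_comp[OF PB _ i] Gw_def intro!: sum.cong)
  qed
  also have "\<dots> = (\<Sum>j<t. (Phi A n t (Suc j) *\<^sub>v vec n (\<lambda>c. u $ (j*n+c))) $ i)"
    using t by (rule sum_if_less)
  finally show ?thesis .
qed

lemma Pmat_mv:
  assumes y: "y \<in> carrier_vec ((T+1)*n)" and i: "i < n"
  shows "(Pmat n T *\<^sub>v y) $ i = y $ (T*n+i)"
proof -
  have P: "Pmat n T \<in> carrier_mat n ((T+1)*n)" unfolding Pmat_def by simp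
  have "(Pmat n T *\<^sub>v y) $ i = (\<Sum>q<(T+1)*n. Pmat n T $$ (i, q) * y $ q)"
    by (rule mv_comp[OF P y i])
  also have "\<dots> = (\<Sum>j<Suc T. \<Sum>c<n. Pmat n T $$ (i, j*n+c) * y $ (j*n+c))"
    using blocksum[of "\<lambda>q. Pmat n T $$ (i, q) * y $ q" "Suc T" n] by simp
  also have "\<dots> = (\<Sum>j<Suc T. \<Sum>c<n. if j = T \<and> c = i then y $ (j*n+c) else 0)"
  proof (intro sum.cong refl)
    fix j c assume "j \<in> {..<Suc T}" "c \<in> {..<n}"
    then have "j*n+c < (T+1)*n" using blk_less[of j "Suc T" c n] by simp
    then show "Pmat n T $$ (i, j*n+c) * y $ (j*n+c) = (if j = T \<and> c = i then y $ (j*n+c) else 0)"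
      using i \<open>c \<in> {..<n}\<close> by (simp add: Pmat_def)
  qed
  also have "\<dots> = y $ (T*n+i)"
    using i by (simp add: sum.If_cases)
  finally show ?thesis .
qed


definition wstack :: "nat \<Rightarrow> nat \<Rightarrow> (nat \<Rightarrow> 'a \<Rightarrow> real vec) \<Rightarrow> 'a \<Rightarrow> real vec" where
  "wstack n T w \<omega> = vec (T*n) (\<lambda>q. w (q div n) \<omega> $ (q mod n))"

lemma wstack_blk:
  assumes wd: "\<And>j. j < T \<Longrightarrow> w j \<omega> \<in> carrier_vec n" and j: "j < T"
  shows "vec n (\<lambda>c. wstack n T w \<omega> $ (j*n+c)) = w j \<omega>"
  using wd[OF j] j by (intro eq_vecI) (auto simp: wstack_def)

lemma ctrl_stack:
  assumes v: "valid_params n m T Ubar K" and wd: "\<And>j. j < T \<Longrightarrow> w j \<omega> \<in> carrier_vec n" and t: "t < T"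
  shows "ctrl m Ubar K w t \<omega> = vec m (\<lambda>c. (stack_u Ubar m T + stack_K K n m T *\<^sub>v wstack n T w \<omega>) $ (t*m+c))"
proof (rule eq_vecI)
  fix c assume "c < dim_vec (vec m (\<lambda>c. (stack_u Ubar m T + stack_K K n m T *\<^sub>v wstack n T w \<omega>) $ (t*m+c)))"
  then have c: "c < m" by simp
  have q: "t*m+c < T*m" using t c by simp
  have SK: "stack_K K n m T \<in> carrier_mat (T*m) (T*n)" unfolding stack_K_def by simp
  have ws: "wstack n T w \<omega> \<in> carrier_vec (T*n)" unfolding wstack_def by simp
  have Kc: "K (t-1) b \<in> carrier_mat m n" if "b < t" for b
    using v that t unfolding valid_params_def by auto
  have "(stack_K K n m T *\<^sub>v wstack n T w \<omega>) $ (t*m+c)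
      = (\<Sum>q<T*n. stack_K K n m T $$ (t*m+c, q) * wstack n T w \<omega> $ q)"
    by (rule mv_comp[OF SK ws q])
  also have "\<dots> = (\<Sum>b<T. \<Sum>r<n. stack_K K n m T $$ (t*m+c, b*n+r) * wstack n T w \<omega> $ (b*n+r))"
    by (rule blocksum)
  also have "\<dots> = (\<Sum>b<T. if b < t then (K (t-1) b *\<^sub>v w b \<omega>) $ c else 0)"
  proof (intro sum.cong refl)
    fix b assume b: "b \<in> {..<T}"
    show "(\<Sum>r<n. stack_K K n m T $$ (t*m+c, b*n+r) * wstack n T w \<omega> $ (b*n+r)) =
       (if b < t then (K (t-1) b *\<^sub>v w b \<omega>) $ c else 0)"
    proof (cases "b < t")
      case True
      have "(\<Sum>r<n. stack_K K n m T $$ (t*m+c, b*n+r) * wstack n T w \<omega> $ (b*n+r))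
          = (\<Sum>r<n. K (t-1) b $$ (c,r) * w b \<omega> $ r)"
        using True b c q by (auto simp: stack_K_def wstack_def intro!: sum.cong)
      also have "\<dots> = (K (t-1) b *\<^sub>v w b \<omega>) $ c"
        using b by (intro mv_comp[OF Kc[OF True] wd c, symmetric]) simp
      finally show ?thesis using True by simp
    next
      case False
      then show ?thesis using b c q by (auto simp: stack_K_def intro!: sum.neutral)
    qed
  qed
  also have "\<dots> = (\<Sum>b<t. (K (t-1) b *\<^sub>v w b \<omega>) $ c)"
    using t by (intro sum_if_less) simp
  finally have 1: "(stack_K K n m T *\<^sub>v wstack n T w \<omega>) $ (t*m+c) = (\<Sum>b<t. (K (t-1) b *\<^sub>v w b \<omega>) $ c)" .
  have "stack_u Ubar m T $ (t*m+c) = Ubar t $ c" using q c by (simp add: stack_u_def)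
  then show "ctrl m Ubar K w t \<omega> $ c = vec m (\<lambda>c. (stack_u Ubar m T + stack_K K n m T *\<^sub>v wstack n T w \<omega>) $ (t*m+c)) $ c"
    using 1 c q SK by (simp add: ctrl_def stack_u_def)
qed (simp add: ctrl_def)

lemma energy_stack:
  assumes v: "valid_params n m T Ubar K" and wd: "\<And>j. j < T \<Longrightarrow> w j \<omega> \<in> carrier_vec n"
  shows "(\<Sum>t<T. ctrl m Ubar K w t \<omega> \<bullet> ctrl m Ubar K w t \<omega>)
     = (stack_u Ubar m T + stack_K K n m T *\<^sub>v wstack n T w \<omega>) \<bullet> (stack_u Ubar m T + stack_K K n m T *\<^sub>v wstack n T w \<omega>)"
proof -
  define us where "us = stack_u Ubar m T + stack_K K n m T *\<^sub>v wstack n T w \<omega>"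
  have usd: "dim_vec us = T*m" unfolding us_def stack_u_def stack_K_def by simp
  have "us \<bullet> us = (\<Sum>q<T*m. us $ q * us $ q)"
    using usd by (simp add: scalar_prod_def lessThan_atLeast0)
  also have "\<dots> = (\<Sum>t<T. \<Sum>c<m. us $ (t*m+c) * us $ (t*m+c))" by (rule blocksum)
  also have "\<dots> = (\<Sum>t<T. ctrl m Ubar K w t \<omega> \<bullet> ctrl m Ubar K w t \<omega>)"
  proof (intro sum.cong refl)
    fix t assume t: "t \<in> {..<T}"
    show "(\<Sum>c<m. us $ (t*m+c) * us $ (t*m+c)) = ctrl m Ubar K w t \<omega> \<bullet> ctrl m Ubar K w t \<omega>"
    proof -
      have e: "ctrl m Ubar K w t \<omega> = vec m (\<lambda>c. us $ (t*m+c))"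
        unfolding us_def using t by (intro ctrl_stack[of n m T Ubar K w \<omega> t, OF v wd]) auto
      show ?thesis unfolding e by (simp add: scalar_prod_def lessThan_atLeast0)
    qed
  qed
  finally show ?thesis unfolding us_def by simp
qed

lemma traj_stack:
  assumes AB: "\<And>t. t < T \<Longrightarrow> A t \<in> carrier_mat n n \<and> B t \<in> carrier_mat n m"
    and x0d: "x0 \<omega> \<in> carrier_vec n"
    and wd: "\<And>t. t < T \<Longrightarrow> w t \<omega> \<in> carrier_vec n"
    and v: "valid_params n m T Ubar K"
  shows "traj A B m Ubar K x0 w T \<omega> = Pmat n T *\<^sub>v (G0 A n T *\<^sub>v x0 \<omega>
      + Gu A B n m T *\<^sub>v (stack_u Ubar m T + stack_K K n m T *\<^sub>v wstack n T w \<omega>)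
      + Gw A n T *\<^sub>v wstack n T w \<omega>)"
proof (rule eq_vecI)
  define us where "us = stack_u Ubar m T + stack_K K n m T *\<^sub>v wstack n T w \<omega>"
  have usd: "us \<in> carrier_vec (T*m)" unfolding us_def
    by (rule add_carrier_vec) (auto simp: stack_u_def stack_K_def wstack_def intro!: mult_mat_vec_carrier)
  have wsd: "wstack n T w \<omega> \<in> carrier_vec (T*n)" unfolding wstack_def by (rule vec_carrier)
  define Xs where "Xs = G0 A n T *\<^sub>v x0 \<omega> + Gu A B n m T *\<^sub>v us + Gw A n T *\<^sub>v wstack n T w \<omega>"
  have G0c: "G0 A n T \<in> carrier_mat ((T+1)*n) n" by (simp add: G0_def)
  have Guc: "Gu A B n m T \<in> carrier_mat ((T+1)*n) (T*m)" by (simp add: Gu_def)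
  have Gwc: "Gw A n T \<in> carrier_mat ((T+1)*n) (T*n)" by (simp add: Gw_def)
  have Xsd: "Xs \<in> carrier_vec ((T+1)*n)" unfolding Xs_def
    using G0c Guc Gwc x0d usd wsd by (metis add_carrier_vec mult_mat_vec_carrier)
  have Phc: "Phi A n T (Suc j) \<in> carrier_mat n n" for j using AB by (intro Phi_carrier) auto
  have TC: "traj A B m Ubar K x0 w T \<omega> = vec n (\<lambda>i. (Phi A n T 0 *\<^sub>v x0 \<omega>) $ i +
      (\<Sum>j<T. (Phi A n T (Suc j) *\<^sub>v (B j *\<^sub>v ctrl m Ubar K w j \<omega> + w j \<omega>)) $ i))"
    using traj_closed[where T=T and A=A and B=B and n=n and m=m and xi=x0 and w=w and \<omega>=\<omega> and Ubar=Ubar and K=K, OF AB x0d wd] by simp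
  fix i assume "i < dim_vec (Pmat n T *\<^sub>v (G0 A n T *\<^sub>v x0 \<omega> + Gu A B n m T *\<^sub>v us + Gw A n T *\<^sub>v wstack n T w \<omega>))"
  then have i: "i < n" by (simp add: Pmat_def)
  have "(Pmat n T *\<^sub>v Xs) $ i = Xs $ (T*n+i)" by (rule Pmat_mv[OF Xsd i])
  also have "\<dots> = (G0 A n T *\<^sub>v x0 \<omega>) $ (T*n+i) + (Gu A B n m T *\<^sub>v us) $ (T*n+i) + (Gw A n T *\<^sub>v wstack n T w \<omega>) $ (T*n+i)"
    unfolding Xs_def using i blk_less[of T "Suc T" i n] by (simp add: G0_def Gu_def Gw_def)
  also have "\<dots> = (Phi A n T 0 *\<^sub>v x0 \<omega>) $ i
      + (\<Sum>j<T. (Phi A n T (Suc j) *\<^sub>v (B j *\<^sub>v ctrl m Ubar K w j \<omega>)) $ i)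
      + (\<Sum>j<T. (Phi A n T (Suc j) *\<^sub>v w j \<omega>) $ i)"
    using G0_mv[where t=T and A=A and n=n and T=T and i=i] Gu_mv[where t=T and A=A and B=B and n=n and m=m and T=T and i=i and u=us]
      Gw_mv[where t=T and A=A and n=n and T=T and i=i and u="wstack n T w \<omega>"] usd wsd AB i x0d
      ctrl_stack[of n m T Ubar K w \<omega>, OF v wd] wstack_blk[of T w \<omega> n, OF wd] unfolding us_def by simp
  also have "\<dots> = (Phi A n T 0 *\<^sub>v x0 \<omega>) $ i +
      (\<Sum>j<T. (Phi A n T (Suc j) *\<^sub>v (B j *\<^sub>v ctrl m Ubar K w j \<omega> + w j \<omega>)) $ i)"
  proof -
    have "(\<Sum>j<T. (Phi A n T (Suc j) *\<^sub>v (B j *\<^sub>v ctrl m Ubar K w j \<omega> + w j \<omega>)) $ i)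
       = (\<Sum>j<T. (Phi A n T (Suc j) *\<^sub>v (B j *\<^sub>v ctrl m Ubar K w j \<omega>)) $ i + (Phi A n T (Suc j) *\<^sub>v w j \<omega>) $ i)"
    proof (rule sum.cong[OF refl])
      fix j assume "j \<in> {..<T}"
      then have j: "j < T" by simp
      have Bc: "B j *\<^sub>v ctrl m Ubar K w j \<omega> \<in> carrier_vec n"
        using AB[OF j] by (auto simp: ctrl_def intro!: mult_mat_vec_carrier)
      show "(Phi A n T (Suc j) *\<^sub>v (B j *\<^sub>v ctrl m Ubar K w j \<omega> + w j \<omega>)) $ i
        = (Phi A n T (Suc j) *\<^sub>v (B j *\<^sub>v ctrl m Ubar K w j \<omega>)) $ i + (Phi A n T (Suc j) *\<^sub>v w j \<omega>) $ i"
        using Phc[of j] Bc wd[OF j] i by (subst mult_add_distrib_mat_vec[of _ n n]) auto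
    qed
    then show ?thesis by (simp add: sum.distrib)
  qed
  also have "\<dots> = traj A B m Ubar K x0 w T \<omega> $ i"
    unfolding TC using i by simp
  finally show "traj A B m Ubar K x0 w T \<omega> $ i = (Pmat n T *\<^sub>v (G0 A n T *\<^sub>v x0 \<omega> + Gu A B n m T *\<^sub>v us + Gw A n T *\<^sub>v wstack n T w \<omega>)) $ i"
    unfolding Xs_def by simp
next
  show "dim_vec (traj A B m Ubar K x0 w T \<omega>) = dim_vec (Pmat n T *\<^sub>v (G0 A n T *\<^sub>v x0 \<omega>
      + Gu A B n m T *\<^sub>v (stack_u Ubar m T + stack_K K n m T *\<^sub>v wstack n T w \<omega>)
      + Gw A n T *\<^sub>v wstack n T w \<omega>))"
    using traj_closed[where T=T and A=A and B=B and n=n and m=m and xi=x0 and w=w and \<omega>=\<omega> and Ubar=Ubar and K=K, OF AB x0d wd] by (simp add: Pmat_def)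
qed


lemma alg1:
  fixes P :: "real mat"
  assumes P: "P \<in> carrier_mat r N" and Ga: "Ga \<in> carrier_mat N n" and Gb: "Gb \<in> carrier_mat N p"
    and Gc: "Gc \<in> carrier_mat N q" and cK: "cK \<in> carrier_mat p q" and x: "x \<in> carrier_vec n"
    and ub: "ub \<in> carrier_vec p" and ws: "ws \<in> carrier_vec q"
  shows "P *\<^sub>v (Ga *\<^sub>v x + Gb *\<^sub>v (ub + cK *\<^sub>v ws) + Gc *\<^sub>v ws)
       = P *\<^sub>v (Gb *\<^sub>v ub) + (P * Ga) *\<^sub>v x + (P * (Gc + Gb * cK)) *\<^sub>v ws"
proof -
  have a: "Ga *\<^sub>v x \<in> carrier_vec N" "Gb *\<^sub>v ub \<in> carrier_vec N" "Gb *\<^sub>v (cK *\<^sub>v ws) \<in> carrier_vec N"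
    "Gc *\<^sub>v ws \<in> carrier_vec N" "cK *\<^sub>v ws \<in> carrier_vec p"
    using Ga Gb Gc cK x ub ws by auto
  have 1: "Gb *\<^sub>v (ub + cK *\<^sub>v ws) = Gb *\<^sub>v ub + Gb *\<^sub>v (cK *\<^sub>v ws)"
    using Gb ub a by (simp add: mult_add_distrib_mat_vec[OF Gb])
  have 2: "(P * (Gc + Gb * cK)) *\<^sub>v ws = P *\<^sub>v (Gc *\<^sub>v ws) + P *\<^sub>v (Gb *\<^sub>v (cK *\<^sub>v ws))"
  proof -
    have "(P * (Gc + Gb * cK)) *\<^sub>v ws = P *\<^sub>v ((Gc + Gb * cK) *\<^sub>v ws)"
      using P Gc Gb cK ws by (intro assoc_mult_mat_vec) auto
    also have "(Gc + Gb * cK) *\<^sub>v ws = Gc *\<^sub>v ws + Gb *\<^sub>v (cK *\<^sub>v ws)"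
      using Gc Gb cK ws by (subst add_mult_distrib_mat_vec[of _ N q]) auto
    also have "P *\<^sub>v (Gc *\<^sub>v ws + Gb *\<^sub>v (cK *\<^sub>v ws)) = P *\<^sub>v (Gc *\<^sub>v ws) + P *\<^sub>v (Gb *\<^sub>v (cK *\<^sub>v ws))"
      using P a by (intro mult_add_distrib_mat_vec) auto
    finally show ?thesis .
  qed
  have 3: "(P * Ga) *\<^sub>v x = P *\<^sub>v (Ga *\<^sub>v x)" using P Ga x by auto
  have b: "P *\<^sub>v (Ga *\<^sub>v x) \<in> carrier_vec r" "P *\<^sub>v (Gb *\<^sub>v ub) \<in> carrier_vec r"
    "P *\<^sub>v (Gb *\<^sub>v (cK *\<^sub>v ws)) \<in> carrier_vec r" "P *\<^sub>v (Gc *\<^sub>v ws) \<in> carrier_vec r"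
    using P a by auto
  have 4: "P *\<^sub>v (Ga *\<^sub>v x + (Gb *\<^sub>v ub + Gb *\<^sub>v (cK *\<^sub>v ws)) + Gc *\<^sub>v ws)
     = P *\<^sub>v (Ga *\<^sub>v x) + (P *\<^sub>v (Gb *\<^sub>v ub) + P *\<^sub>v (Gb *\<^sub>v (cK *\<^sub>v ws))) + P *\<^sub>v (Gc *\<^sub>v ws)"
    using P a b by (simp add: mult_add_distrib_mat_vec[OF P]
        assoc_add_vec[OF b(1) add_carrier_vec[OF b(2) b(3)] b(4)] assoc_add_vec[OF b(2) b(3) b(4)])
  show ?thesis unfolding 1 2 3 4
    by (rule eq_vecI) (use b in auto)
qed

lemma alg2:
  fixes P :: "real mat"
  assumes P: "P \<in> carrier_mat r N" and Ga: "Ga \<in> carrier_mat N n" and S: "S \<in> carrier_mat n n"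
    and H: "H \<in> carrier_mat N q" and Wb: "Wb \<in> carrier_mat q q"
  shows "P * (Ga * S * transpose_mat Ga + H * Wb * transpose_mat H) * transpose_mat P
     = (P * Ga) * S * transpose_mat (P * Ga) + (P * H) * Wb * transpose_mat (P * H)"
proof -
  have X: "Ga * S * transpose_mat Ga \<in> carrier_mat N N" "H * Wb * transpose_mat H \<in> carrier_mat N N"
    using Ga S H Wb by auto
  have "P * (Ga * S * transpose_mat Ga + H * Wb * transpose_mat H) * transpose_mat P
      = P * (Ga * S * transpose_mat Ga) * transpose_mat P + P * (H * Wb * transpose_mat H) * transpose_mat P"
    using P X by (simp add: mult_add_distrib_mat[of _ r N] add_mult_distrib_mat[of _ r N])
  also have "P * (Ga * S * transpose_mat Ga) * transpose_mat P = (P * Ga) * S * transpose_mat (P * Ga)"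
  proof -
    have c: "Ga * S \<in> carrier_mat N n" "S * transpose_mat Ga \<in> carrier_mat n N"
      "transpose_mat Ga * transpose_mat P \<in> carrier_mat n r" "P * Ga \<in> carrier_mat r n"
      "S * (transpose_mat Ga * transpose_mat P) \<in> carrier_mat n r"
      "Ga * (S * transpose_mat Ga) \<in> carrier_mat N N"
      "Ga * (S * (transpose_mat Ga * transpose_mat P)) \<in> carrier_mat N r"
      "transpose_mat P \<in> carrier_mat N r" "transpose_mat Ga \<in> carrier_mat n N"
      using P Ga S by auto
    have "P * (Ga * S * transpose_mat Ga) = P * (Ga * S) * transpose_mat Ga"
      using assoc_mult_mat[OF P c(1) c(9)] by simp
    also have "P * (Ga * S) = P * Ga * S" using assoc_mult_mat[OF P Ga S] by simp
    finally have "P * (Ga * S * transpose_mat Ga) * transpose_mat P = P * Ga * S * transpose_mat Ga * transpose_mat P"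
      by simp
    also have "\<dots> = P * Ga * S * (transpose_mat Ga * transpose_mat P)"
      using assoc_mult_mat[OF mult_carrier_mat[OF c(4) S] c(9) c(8)] by simp
    finally show ?thesis by (simp add: transpose_mult[OF P Ga])
  qed
  also have "P * (H * Wb * transpose_mat H) * transpose_mat P = (P * H) * Wb * transpose_mat (P * H)"
  proof -
    have c: "H * Wb \<in> carrier_mat N q" "Wb * transpose_mat H \<in> carrier_mat q N"
      "transpose_mat H * transpose_mat P \<in> carrier_mat q r" "P * H \<in> carrier_mat r q"
      "Wb * (transpose_mat H * transpose_mat P) \<in> carrier_mat q r"
      "H * (Wb * transpose_mat H) \<in> carrier_mat N N"
      "H * (Wb * (transpose_mat H * transpose_mat P)) \<in> carrier_mat N r"
      "transpose_mat P \<in> carrier_mat N r" "transpose_mat H \<in> carrier_mat q N"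
      using P H Wb by auto
    have "P * (H * Wb * transpose_mat H) = P * (H * Wb) * transpose_mat H"
      using assoc_mult_mat[OF P c(1) c(9)] by simp
    also have "P * (H * Wb) = P * H * Wb" using assoc_mult_mat[OF P H Wb] by simp
    finally have "P * (H * Wb * transpose_mat H) * transpose_mat P = P * H * Wb * transpose_mat H * transpose_mat P"
      by simp
    also have "\<dots> = P * H * Wb * (transpose_mat H * transpose_mat P)"
      using assoc_mult_mat[OF mult_carrier_mat[OF c(4) Wb] c(9) c(8)] by simp
    finally show ?thesis by (simp add: transpose_mult[OF P H])
  qed
  finally show ?thesis .
qed

lemma trace_add: "A \<in> carrier_mat n n \<Longrightarrow> B \<in> carrier_mat n n \<Longrightarrow> mat_trace (A + B) = mat_trace A + mat_trace B"
  by (simp add: mat_trace_def sum.distrib)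

lemma trace_quad: "(L::real mat) \<in> carrier_mat n N \<Longrightarrow> S \<in> carrier_mat N N \<Longrightarrow>
   mat_trace (L * S * transpose_mat L) = (\<Sum>i<n. \<Sum>k<N. \<Sum>l<N. L $$ (i,k) * L $$ (i,l) * S $$ (k,l))"
proof -
  assume L: "L \<in> carrier_mat n N" and S: "S \<in> carrier_mat N N"
  have "dim_row (L * S * transpose_mat L) = n" using L by simp
  then show ?thesis unfolding mat_trace_def
    using mat_quad_comp[OF L S] by (intro sum.cong) auto
qed



lemma divmod_lt: "q < T*n \<Longrightarrow> q div n < (T::nat) \<and> q mod n < n"
  by (metis less_mult_imp_div_less mod_less_divisor mult_0_right neq0_conv not_less0)

lemma (in prob_space) ws_facts:
  fixes x0 :: "'a \<Rightarrow> real vec" and w :: "nat \<Rightarrow> 'a \<Rightarrow> real vec" and mu0 :: "real vec"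
  assumes W: "W \<in> carrier_mat n n"
    and w_dim: "\<And>t \<omega>. t < T \<Longrightarrow> \<omega> \<in> space M \<Longrightarrow> w t \<omega> \<in> carrier_vec n"
    and x0_meas: "\<And>i. i < n \<Longrightarrow> (\<lambda>\<omega>. vec_index (x0 \<omega>) i) \<in> borel_measurable M"
    and w_meas: "\<And>t i. t < T \<Longrightarrow> i < n \<Longrightarrow> (\<lambda>\<omega>. vec_index (w t \<omega>) i) \<in> borel_measurable M"
    and x0_L2: "\<And>i. i < n \<Longrightarrow> integrable M (\<lambda>\<omega>. (vec_index (x0 \<omega>) i)^2)"
    and w_L2: "\<And>t i. t < T \<Longrightarrow> i < n \<Longrightarrow> integrable M (\<lambda>\<omega>. (vec_index (w t \<omega>) i)^2)"
    and x0_mean: "mean_vec M n x0 = mu0"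
    and w_mean: "\<And>t. t < T \<Longrightarrow> mean_vec M n (w t) = 0\<^sub>v n"
    and w_cov: "\<And>t s. t < T \<Longrightarrow> s < T \<Longrightarrow>
                   cross_mat M n (w t) (w s) = (if t = s then W else 0\<^sub>m n n)"
    and x0_w: "\<And>t. t < T \<Longrightarrow> cross_mat M n x0 (w t) = 0\<^sub>m n n"
  shows "\<And>k. k < n \<Longrightarrow> L2 M (\<lambda>\<omega>. x0 \<omega> $ k)"
    and "\<And>q. q < T*n \<Longrightarrow> L2 M (\<lambda>\<omega>. wstack n T w \<omega> $ q)"
    and "mean_vec M (T*n) (wstack n T w) = 0\<^sub>v (T*n)"
    and "cov_mat M (T*n) (wstack n T w) = Wbold W n T"
    and "\<And>k l. k < n \<Longrightarrow> l < T*n \<Longrightarrow>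
          (\<integral>\<omega>. (x0 \<omega> $ k - mu0 $ k) * (wstack n T w \<omega> $ l - 0\<^sub>v (T*n) $ l) \<partial>M) = 0"
proof -
  show xL: "L2 M (\<lambda>\<omega>. x0 \<omega> $ k)" if "k < n" for k
    using x0_meas x0_L2 that unfolding L2_def by auto
  have wsq: "wstack n T w \<omega> $ q = w (q div n) \<omega> $ (q mod n)" if "q < T*n" for q \<omega>
    using that by (simp add: wstack_def)
  have wL: "L2 M (\<lambda>\<omega>. w t \<omega> $ i)" if "t < T" "i < n" for t i
    using w_meas w_L2 that unfolding L2_def by auto
  show wsL: "L2 M (\<lambda>\<omega>. wstack n T w \<omega> $ q)" if "q < T*n" for q
    using wsq[OF that] wL divmod_lt[OF that] by simp
  have wI: "(\<integral>\<omega>. w t \<omega> $ i \<partial>M) = 0" if "t < T" "i < n" for t i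
  proof -
    have "(\<integral>\<omega>. w t \<omega> $ i \<partial>M) = mean_vec M n (w t) $ i" using that by (simp add: mean_vec_def)
    then show ?thesis using w_mean[OF that(1)] that by simp
  qed
  have wsI: "(\<integral>\<omega>. wstack n T w \<omega> $ q \<partial>M) = 0" if "q < T*n" for q
    using wsq[OF that] wI divmod_lt[OF that] by simp
  show wsm: "mean_vec M (T*n) (wstack n T w) = 0\<^sub>v (T*n)"
    using wsI by (intro eq_vecI) (auto simp: mean_vec_def)
  show "cov_mat M (T*n) (wstack n T w) = Wbold W n T"
  proof (rule eq_matI)
    fix p q assume "p < dim_row (Wbold W n T)" "q < dim_col (Wbold W n T)"
    then have p: "p < T*n" and q: "q < T*n" by (auto simp: Wbold_def)
    have "cov_mat M (T*n) (wstack n T w) $$ (p,q) = (\<integral>\<omega>. w (p div n) \<omega> $ (p mod n) * w (q div n) \<omega> $ (q mod n) \<partial>M)"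
      unfolding cov_mat_def wsm using p q by (simp add: wsq)
    also have "\<dots> = cross_mat M n (w (p div n)) (w (q div n)) $$ (p mod n, q mod n)"
      using divmod_lt[OF p] divmod_lt[OF q] by (simp add: cross_mat_def)
    also have "\<dots> = Wbold W n T $$ (p,q)"
      using w_cov divmod_lt[OF p] divmod_lt[OF q] p q W by (simp add: Wbold_def)
    finally show "cov_mat M (T*n) (wstack n T w) $$ (p,q) = Wbold W n T $$ (p,q)" .
  qed (auto simp: cov_mat_def Wbold_def)
  show "(\<integral>\<omega>. (x0 \<omega> $ k - mu0 $ k) * (wstack n T w \<omega> $ l - 0\<^sub>v (T*n) $ l) \<partial>M) = 0"
    if k: "k < n" and l: "l < T*n" for k l
  proof -
    have "(\<integral>\<omega>. (x0 \<omega> $ k - mu0 $ k) * (wstack n T w \<omega> $ l - 0\<^sub>v (T*n) $ l) \<partial>M)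
        = (\<integral>\<omega>. x0 \<omega> $ k * wstack n T w \<omega> $ l - mu0 $ k * wstack n T w \<omega> $ l \<partial>M)"
      using l by (simp add: algebra_simps)
    also have "\<dots> = (\<integral>\<omega>. x0 \<omega> $ k * wstack n T w \<omega> $ l \<partial>M) - mu0 $ k * (\<integral>\<omega>. wstack n T w \<omega> $ l \<partial>M)"
      using L2_mult_integrable[OF xL[OF k] wsL[OF l]] L2_integrable[OF wsL[OF l]] by simp
    also have "(\<integral>\<omega>. x0 \<omega> $ k * wstack n T w \<omega> $ l \<partial>M) = cross_mat M n x0 (w (l div n)) $$ (k, l mod n)"
      using divmod_lt[OF l] k by (simp add: cross_mat_def wsq[OF l])
    also have "\<dots> = 0" using x0_w divmod_lt[OF l] k by simp
    finally show ?thesis using wsI[OF l] by simp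
  qed
qed


lemma mv_zero_r: "(A::real mat) \<in> carrier_mat r N \<Longrightarrow> A *\<^sub>v 0\<^sub>v N = 0\<^sub>v r"
  by (intro eq_vecI) (auto simp: scalar_prod_def)

lemma mv_zero_l: "(x::real vec) \<in> carrier_vec N \<Longrightarrow> 0\<^sub>m r N *\<^sub>v x = 0\<^sub>v r"
  by (intro eq_vecI) (auto simp: scalar_prod_def)

lemma vec_minus_zero_iff: "(a::real vec) \<in> carrier_vec n \<Longrightarrow> b \<in> carrier_vec n \<Longrightarrow> (a - b = 0\<^sub>v n) = (a = b)"
  by (auto simp: vec_eq_iff)

lemma (in prob_space) second_moment_one:
  assumes "L2 M f"
  shows "(\<integral>\<omega>. (f \<omega>)^2 \<partial>M) = (\<integral>\<omega>. (f \<omega> - (\<integral>\<omega>. f \<omega> \<partial>M)) * (f \<omega> - (\<integral>\<omega>. f \<omega> \<partial>M)) \<partial>M) + (\<integral>\<omega>. f \<omega> \<partial>M)^2"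
proof -
  define a where "a = (\<integral>\<omega>. f \<omega> \<partial>M)"
  have i1: "integrable M f" using assms L2_integrable by auto
  have i2: "integrable M (\<lambda>\<omega>. (f \<omega>)^2)" using assms unfolding L2_def by auto
  have "(\<integral>\<omega>. (f \<omega> - a) * (f \<omega> - a) \<partial>M) = (\<integral>\<omega>. ((f \<omega>)^2 - 2 * a * f \<omega>) + a^2 \<partial>M)"
    by (intro Bochner_Integration.integral_cong) (auto simp: power2_eq_square algebra_simps)
  also have "\<dots> = (\<integral>\<omega>. (f \<omega>)^2 \<partial>M) - 2 * a * a + a^2"
    using i1 i2 unfolding a_def by (simp add: prob_space)
  finally show ?thesis unfolding a_def[symmetric] by (simp add: power2_eq_square)
qed

lemma (in prob_space) sum_second_moment:
  fixes X :: "'a \<Rightarrow> real vec"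
  assumes "\<And>q. q < N \<Longrightarrow> L2 M (\<lambda>\<omega>. X \<omega> $ q)"
  shows "(\<Sum>q<N. \<integral>\<omega>. (X \<omega> $ q)^2 \<partial>M) = mat_trace (cov_mat M N X) + mean_vec M N X \<bullet> mean_vec M N X"
proof -
  have "(\<integral>\<omega>. (X \<omega> $ q)^2 \<partial>M) = cov_mat M N X $$ (q,q) + (mean_vec M N X $ q) * (mean_vec M N X $ q)"
    if q: "q < N" for q
    using second_moment_one[OF assms[OF q]] q by (simp add: cov_mat_def mean_vec_def power2_eq_square)
  then have "(\<Sum>q<N. \<integral>\<omega>. (X \<omega> $ q)^2 \<partial>M) = (\<Sum>q<N. cov_mat M N X $$ (q,q)) + (\<Sum>q<N. mean_vec M N X $ q * mean_vec M N X $ q)"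
    by (simp add: sum.distrib)
  also have "\<dots> = mat_trace (cov_mat M N X) + mean_vec M N X \<bullet> mean_vec M N X"
    by (simp add: mat_trace_def cov_mat_def scalar_prod_def mean_vec_def lessThan_atLeast0)
  finally show ?thesis .
qed


definition quadf :: "real mat \<Rightarrow> nat \<Rightarrow> (nat \<Rightarrow> real) \<Rightarrow> real" where
  "quadf S N x = (\<Sum>k<N. \<Sum>l<N. x k * x l * S $$ (k,l))"

lemma quadf_convex_id:
  "quadf S N (\<lambda>k. th * a k + (1 - th) * b k)
     = th * quadf S N a + (1 - th) * quadf S N b - th * (1 - th) * quadf S N (\<lambda>k. a k - b k)"
proof -
  have e: "(th * a k + (1 - th) * b k) * (th * a l + (1 - th) * b l) * S $$ (k,l)
     = th * (a k * a l * S $$ (k,l)) + (1 - th) * (b k * b l * S $$ (k,l))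
       - th * (1 - th) * ((a k - b k) * (a l - b l) * S $$ (k,l))" for k l
    by (simp add: algebra_simps power2_eq_square)
  show ?thesis unfolding quadf_def e
    by (simp add: sum.distrib sum_subtractf sum_distrib_left)
qed

lemma quadf_psd:
  assumes "sym_psd N S" shows "quadf S N x \<ge> 0"
proof -
  have S: "S \<in> carrier_mat N N" and p: "\<And>v. v \<in> carrier_vec N \<Longrightarrow> v \<bullet> (S *\<^sub>v v) \<ge> 0"
    using assms unfolding sym_psd_def by auto
  define v where "v = vec N x"
  have v: "v \<in> carrier_vec N" unfolding v_def by simp
  have "v \<bullet> (S *\<^sub>v v) = (\<Sum>k<N. v $ k * (S *\<^sub>v v) $ k)"
    using v S by (simp add: scalar_prod_def lessThan_atLeast0 del: index_mult_mat_vec)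
  also have "\<dots> = (\<Sum>k<N. x k * (\<Sum>l<N. S $$ (k,l) * v $ l))"
  proof (intro sum.cong refl)
    fix k assume "k \<in> {..<N}"
    then have k: "k < N" by simp
    show "v $ k * (S *\<^sub>v v) $ k = x k * (\<Sum>l<N. S $$ (k,l) * v $ l)"
      using mv_comp[OF S v k] k by (simp add: v_def)
  qed
  also have "\<dots> = quadf S N x"
    unfolding quadf_def v_def by (auto simp: sum_distrib_left intro!: sum.cong)
  finally show ?thesis using p[OF v] by simp
qed

lemma quadf_Wbold:
  assumes W: "W \<in> carrier_mat n n"
  shows "quadf (Wbold W n T) (T*n) x = (\<Sum>a<T. quadf W n (\<lambda>r. x (a*n+r)))"
proof -
  have "quadf (Wbold W n T) (T*n) x = (\<Sum>a<T. \<Sum>r<n. \<Sum>l<T*n. x (a*n+r) * x l * Wbold W n T $$ (a*n+r, l))"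
    unfolding quadf_def by (rule blocksum)
  also have "\<dots> = (\<Sum>a<T. \<Sum>r<n. \<Sum>b<T. \<Sum>s<n. x (a*n+r) * x (b*n+s) * Wbold W n T $$ (a*n+r, b*n+s))"
    by (simp add: blocksum)
  also have "\<dots> = (\<Sum>a<T. \<Sum>r<n. \<Sum>b<T. if b = a then (\<Sum>s<n. x (a*n+r) * x (a*n+s) * W $$ (r, s)) else 0)"
    by (intro sum.cong refl) (auto simp: Wbold_def)
  also have "\<dots> = (\<Sum>a<T. quadf W n (\<lambda>r. x (a*n+r)))"
    unfolding quadf_def by (simp add: sum.delta)
  finally show ?thesis .
qed

lemma mm_comp: "(A::real mat) \<in> carrier_mat r N \<Longrightarrow> B \<in> carrier_mat N c \<Longrightarrow> i < r \<Longrightarrow> k < c \<Longrightarrow>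
   (A * B) $$ (i,k) = (\<Sum>j<N. A $$ (i,j) * B $$ (j,k))"
  by (auto simp: scalar_prod_def lessThan_atLeast0 intro!: sum.cong)

lemma affine_entry:
  fixes P :: "real mat"
  assumes P: "P \<in> carrier_mat r N" and G: "G \<in> carrier_mat N q" and U: "U \<in> carrier_mat N p"
    and K1: "K1 \<in> carrier_mat p q" and K2: "K2 \<in> carrier_mat p q" and i: "i < r" and k: "k < q"
  shows "(P * (G + U * (th \<cdot>\<^sub>m K1 + (1 - th) \<cdot>\<^sub>m K2))) $$ (i,k)
     = th * (P * (G + U * K1)) $$ (i,k) + (1 - th) * (P * (G + U * K2)) $$ (i,k)"
proof -
  have Kc: "th \<cdot>\<^sub>m K1 + (1 - th) \<cdot>\<^sub>m K2 \<in> carrier_mat p q" using K1 K2 by auto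
  have X: "\<And>K. K \<in> carrier_mat p q \<Longrightarrow> G + U * K \<in> carrier_mat N q" using G U by auto
  have E: "\<And>K::real mat. K \<in> carrier_mat p q \<Longrightarrow> (P * (G + U * K)) $$ (i,k) = (\<Sum>j<N. P $$ (i,j) * (G $$ (j,k) + (\<Sum>l<p. U $$ (j,l) * K $$ (l,k))))"
  proof -
    fix K :: "real mat" assume K: "K \<in> carrier_mat p q"
    have "(P * (G + U * K)) $$ (i,k) = (\<Sum>j<N. P $$ (i,j) * (G + U * K) $$ (j,k))"
      by (rule mm_comp[OF P X[OF K] i k])
    also have "\<dots> = (\<Sum>j<N. P $$ (i,j) * (G $$ (j,k) + (\<Sum>l<p. U $$ (j,l) * K $$ (l,k))))"
    proof (intro sum.cong refl)
      fix j assume "j \<in> {..<N}"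
      then have j: "j < N" by simp
      have "(G + U * K) $$ (j,k) = G $$ (j,k) + (U * K) $$ (j,k)" using G U K j k by simp
      also have "(U * K) $$ (j,k) = (\<Sum>l<p. U $$ (j,l) * K $$ (l,k))" by (rule mm_comp[OF U K j k])
      finally show "P $$ (i,j) * (G + U * K) $$ (j,k) = P $$ (i,j) * (G $$ (j,k) + (\<Sum>l<p. U $$ (j,l) * K $$ (l,k)))"
        by simp
    qed
    finally show "(P * (G + U * K)) $$ (i,k) = (\<Sum>j<N. P $$ (i,j) * (G $$ (j,k) + (\<Sum>l<p. U $$ (j,l) * K $$ (l,k))))" .
  qed
  have "(\<Sum>j<N. P $$ (i,j) * (G $$ (j,k) + (\<Sum>l<p. U $$ (j,l) * (th \<cdot>\<^sub>m K1 + (1 - th) \<cdot>\<^sub>m K2) $$ (l,k))))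
     = (\<Sum>j<N. th * (P $$ (i,j) * (G $$ (j,k) + (\<Sum>l<p. U $$ (j,l) * K1 $$ (l,k))))
          + (1 - th) * (P $$ (i,j) * (G $$ (j,k) + (\<Sum>l<p. U $$ (j,l) * K2 $$ (l,k)))))"
  proof (intro sum.cong refl)
    fix j assume "j \<in> {..<N}"
    have "(\<Sum>l<p. U $$ (j,l) * (th \<cdot>\<^sub>m K1 + (1 - th) \<cdot>\<^sub>m K2) $$ (l,k))
       = th * (\<Sum>l<p. U $$ (j,l) * K1 $$ (l,k)) + (1 - th) * (\<Sum>l<p. U $$ (j,l) * K2 $$ (l,k))"
      using K1 K2 k by (simp add: sum_distrib_left sum.distrib[symmetric] algebra_simps)
    note h = this
    show "P $$ (i,j) * (G $$ (j,k) + (\<Sum>l<p. U $$ (j,l) * (th \<cdot>\<^sub>m K1 + (1 - th) \<cdot>\<^sub>m K2) $$ (l,k)))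
      = th * (P $$ (i,j) * (G $$ (j,k) + (\<Sum>l<p. U $$ (j,l) * K1 $$ (l,k))))
          + (1 - th) * (P $$ (i,j) * (G $$ (j,k) + (\<Sum>l<p. U $$ (j,l) * K2 $$ (l,k))))"
      unfolding h by (simp add: algebra_simps)
  qed
  then show ?thesis unfolding E[OF Kc] E[OF K1] E[OF K2]
    by (simp add: sum.distrib sum_distrib_left)
qed

lemma affine_vec_entry:
  fixes P :: "real mat"
  assumes P: "P \<in> carrier_mat r N" and U: "U \<in> carrier_mat N p" and c: "c \<in> carrier_vec N"
    and u1: "u1 \<in> carrier_vec p" and u2: "u2 \<in> carrier_vec p" and i: "i < r"
  shows "(P *\<^sub>v (U *\<^sub>v (th \<cdot>\<^sub>v u1 + (1 - th) \<cdot>\<^sub>v u2) + c)) $ i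
     = th * (P *\<^sub>v (U *\<^sub>v u1 + c)) $ i + (1 - th) * (P *\<^sub>v (U *\<^sub>v u2 + c)) $ i"
proof -
  have uc: "th \<cdot>\<^sub>v u1 + (1 - th) \<cdot>\<^sub>v u2 \<in> carrier_vec p" using u1 u2 by auto
  have E: "\<And>u::real vec. u \<in> carrier_vec p \<Longrightarrow> (P *\<^sub>v (U *\<^sub>v u + c)) $ i = (\<Sum>j<N. P $$ (i,j) * ((\<Sum>l<p. U $$ (j,l) * u $ l) + c $ j))"
  proof -
    fix u :: "real vec" assume u: "u \<in> carrier_vec p"
    have X: "U *\<^sub>v u + c \<in> carrier_vec N" using U u c by auto
    have "(P *\<^sub>v (U *\<^sub>v u + c)) $ i = (\<Sum>j<N. P $$ (i,j) * (U *\<^sub>v u + c) $ j)"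
      by (rule mv_comp[OF P X i])
    also have "\<dots> = (\<Sum>j<N. P $$ (i,j) * ((\<Sum>l<p. U $$ (j,l) * u $ l) + c $ j))"
    proof (intro sum.cong refl)
      fix j assume j: "j \<in> {..<N}"
      have "(U *\<^sub>v u + c) $ j = (U *\<^sub>v u) $ j + c $ j" using j c by simp
      also have "(U *\<^sub>v u) $ j = (\<Sum>l<p. U $$ (j,l) * u $ l)" using j by (intro mv_comp[OF U u]) simp
      finally show "P $$ (i,j) * (U *\<^sub>v u + c) $ j = P $$ (i,j) * ((\<Sum>l<p. U $$ (j,l) * u $ l) + c $ j)"
        by simp
    qed
    finally show "(P *\<^sub>v (U *\<^sub>v u + c)) $ i = (\<Sum>j<N. P $$ (i,j) * ((\<Sum>l<p. U $$ (j,l) * u $ l) + c $ j))" .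
  qed
  have "(\<Sum>j<N. P $$ (i,j) * ((\<Sum>l<p. U $$ (j,l) * (th \<cdot>\<^sub>v u1 + (1 - th) \<cdot>\<^sub>v u2) $ l) + c $ j))
     = (\<Sum>j<N. th * (P $$ (i,j) * ((\<Sum>l<p. U $$ (j,l) * u1 $ l) + c $ j))
          + (1 - th) * (P $$ (i,j) * ((\<Sum>l<p. U $$ (j,l) * u2 $ l) + c $ j)))"
  proof (intro sum.cong refl)
    fix j assume "j \<in> {..<N}"
    have "(\<Sum>l<p. U $$ (j,l) * (th \<cdot>\<^sub>v u1 + (1 - th) \<cdot>\<^sub>v u2) $ l)
       = th * (\<Sum>l<p. U $$ (j,l) * u1 $ l) + (1 - th) * (\<Sum>l<p. U $$ (j,l) * u2 $ l)"
      using u1 u2 by (simp add: sum_distrib_left sum.distrib[symmetric] algebra_simps)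
    note h = this
    show "P $$ (i,j) * ((\<Sum>l<p. U $$ (j,l) * (th \<cdot>\<^sub>v u1 + (1 - th) \<cdot>\<^sub>v u2) $ l) + c $ j)
      = th * (P $$ (i,j) * ((\<Sum>l<p. U $$ (j,l) * u1 $ l) + c $ j))
          + (1 - th) * (P $$ (i,j) * ((\<Sum>l<p. U $$ (j,l) * u2 $ l) + c $ j))"
      unfolding h by (simp add: algebra_simps)
  qed
  then show ?thesis unfolding E[OF uc] E[OF u1] E[OF u2]
    by (simp add: sum.distrib sum_distrib_left)
qed



lemma carriers_std:
  "G0 A n T \<in> carrier_mat ((T+1)*n) n"
  "Gu A B n m T \<in> carrier_mat ((T+1)*n) (T*m)"
  "Gw A n T \<in> carrier_mat ((T+1)*n) (T*n)"
  "Pmat n T \<in> carrier_mat n ((T+1)*n)"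
  "Wbold W n T \<in> carrier_mat (T*n) (T*n)"
  "stack_u Ubar m T \<in> carrier_vec (T*m)"
  "stack_K K n m T \<in> carrier_mat (T*m) (T*n)"
  "wstack n T w \<omega> \<in> carrier_vec (T*n)"
  by (auto simp: G0_def Gu_def Gw_def Pmat_def Wbold_def stack_u_def stack_K_def wstack_def)

lemma quadf_cong: "(\<And>k. k < N \<Longrightarrow> x k = y k) \<Longrightarrow> quadf S N x = quadf S N y"
  unfolding quadf_def by (auto intro!: sum.cong)

lemma quadf_Wbold_nonneg: "sym_psd n W \<Longrightarrow> quadf (Wbold W n T) (T*n) x \<ge> 0"
  by (subst quadf_Wbold) (auto simp: sym_psd_def intro!: sum_nonneg quadf_psd)

lemma quadf_convex_le:
  assumes "sym_psd n W" "0 \<le> th" "th \<le> 1"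
  shows "quadf (Wbold W n T) (T*n) (\<lambda>k. th * a k + (1 - th) * b k)
     \<le> th * quadf (Wbold W n T) (T*n) a + (1 - th) * quadf (Wbold W n T) (T*n) b"
proof -
  have "0 \<le> th * (1 - th) * quadf (Wbold W n T) (T*n) (\<lambda>k. a k - b k)"
    using assms quadf_Wbold_nonneg[OF assms(1)] by simp
  then show ?thesis unfolding quadf_convex_id by simp
qed

lemma calJ1_eq:
  assumes cK: "cK \<in> carrier_mat (T*m) (T*n)" and S0: "Sigma0 \<in> carrier_mat n n" and W: "W \<in> carrier_mat n n"
  shows "Pmat n T * hfun A B Sigma0 W n m T cK * transpose_mat (Pmat n T)
      = (Pmat n T * G0 A n T) * Sigma0 * transpose_mat (Pmat n T * G0 A n T)
        + (Pmat n T * (Gw A n T + Gu A B n m T * cK)) * Wbold W n T * transpose_mat (Pmat n T * (Gw A n T + Gu A B n m T * cK))"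
    and "calJ1 A B Sigma0 W n m T cK = mat_trace ((Pmat n T * G0 A n T) * Sigma0 * transpose_mat (Pmat n T * G0 A n T))
        + (\<Sum>i<n. quadf (Wbold W n T) (T*n) (\<lambda>k. (Pmat n T * (Gw A n T + Gu A B n m T * cK)) $$ (i,k)))"
proof -
  have H: "Gw A n T + Gu A B n m T * cK \<in> carrier_mat ((T+1)*n) (T*n)"
    by (rule add_carrier_mat[OF mult_carrier_mat[OF carriers_std(2)[of A B n m T] cK]])
  show 1: "Pmat n T * hfun A B Sigma0 W n m T cK * transpose_mat (Pmat n T)
      = (Pmat n T * G0 A n T) * Sigma0 * transpose_mat (Pmat n T * G0 A n T)
        + (Pmat n T * (Gw A n T + Gu A B n m T * cK)) * Wbold W n T * transpose_mat (Pmat n T * (Gw A n T + Gu A B n m T * cK))"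
    unfolding hfun_def by (rule alg2[OF carriers_std(4) carriers_std(1) S0 H carriers_std(5)])
  have c1: "Pmat n T * G0 A n T \<in> carrier_mat n n" by (rule mult_carrier_mat[OF carriers_std(4) carriers_std(1)])
  have c2: "Pmat n T * (Gw A n T + Gu A B n m T * cK) \<in> carrier_mat n (T*n)" by (rule mult_carrier_mat[OF carriers_std(4) H])
  show "calJ1 A B Sigma0 W n m T cK = mat_trace ((Pmat n T * G0 A n T) * Sigma0 * transpose_mat (Pmat n T * G0 A n T))
        + (\<Sum>i<n. quadf (Wbold W n T) (T*n) (\<lambda>k. (Pmat n T * (Gw A n T + Gu A B n m T * cK)) $$ (i,k)))"
  proof -
    have c3: "(Pmat n T * G0 A n T) * Sigma0 * transpose_mat (Pmat n T * G0 A n T) \<in> carrier_mat n n"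
      using c1 S0 by auto
    have c4: "(Pmat n T * (Gw A n T + Gu A B n m T * cK)) * Wbold W n T * transpose_mat (Pmat n T * (Gw A n T + Gu A B n m T * cK)) \<in> carrier_mat n n"
      using c2 carriers_std(5)[of W n T] by auto
    show ?thesis
      unfolding calJ1_def 1 trace_add[OF c3 c4] trace_quad[OF c2 carriers_std(5)] quadf_def by simp
  qed
qed

lemma part_surj: "\<forall>p\<in>Dset n m T. \<exists>Ubar K. valid_params n m T Ubar K \<and> p = (stack_u Ubar m T, stack_K K n m T)"
proof
  fix p assume "p \<in> Dset n m T"
  then obtain ub cK where p: "p = (ub, cK)" and ub: "ub \<in> carrier_vec (T*m)" and cK: "cK \<in> carrier_mat (T*m) (T*n)"
    and z: "\<And>i j. i < T*m \<Longrightarrow> j < T*n \<Longrightarrow> \<not> (j div n < i div m) \<Longrightarrow> cK $$ (i,j) = 0"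
    unfolding Dset_def by auto
  define Ubar where "Ubar t = vec m (\<lambda>c. ub $ (t*m+c))" for t
  define K where "K t tau = mat m n (\<lambda>(c,r). cK $$ ((t+1)*m + c, tau*n + r))" for t tau
  have v: "valid_params n m T Ubar K" unfolding valid_params_def Ubar_def K_def by auto
  have u: "stack_u Ubar m T = ub"
  proof (rule eq_vecI)
    fix i assume "i < dim_vec ub"
    then have i: "i < T*m" using ub by simp
    then show "stack_u Ubar m T $ i = ub $ i"
      using divmod_lt[OF i] by (simp add: stack_u_def Ubar_def)
  qed (use ub in \<open>simp add: stack_u_def\<close>)
  have k: "stack_K K n m T = cK"
  proof (rule eq_matI)
    fix i j assume "i < dim_row cK" "j < dim_col cK"
    then have i: "i < T*m" and j: "j < T*n" using cK by auto
    show "stack_K K n m T $$ (i,j) = cK $$ (i,j)"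
    proof (cases "j div n < i div m")
      case True
      then have "i div m - 1 + 1 = i div m" by simp
      then have "(i div m - 1 + 1) * m + i mod m = i" by simp
      then show ?thesis using True i j divmod_lt[OF i] divmod_lt[OF j]
        by (simp add: stack_K_def K_def)
    next
      case False
      then show ?thesis using i j z by (simp add: stack_K_def)
    qed
  qed (use cK in \<open>auto simp: stack_K_def\<close>)
  show "\<exists>Ubar K. valid_params n m T Ubar K \<and> p = (stack_u Ubar m T, stack_K K n m T)"
    using v u k p by blast
qed


lemma part_convex_obj:
  assumes W: "sym_psd n W" and S0: "Sigma0 \<in> carrier_mat n n"
  shows "convex_obj (Dset n m T) (calJ1 A B Sigma0 W n m T)"
  unfolding convex_obj_def
proof (intro ballI allI impI)
  fix p q and th :: real
  assume p: "p \<in> Dset n m T" and q: "q \<in> Dset n m T" and th: "0 \<le> th \<and> th \<le> 1"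
  have Wc: "W \<in> carrier_mat n n" using W unfolding sym_psd_def by auto
  have K1: "snd p \<in> carrier_mat (T*m) (T*n)" using p unfolding Dset_def by auto
  have K2: "snd q \<in> carrier_mat (T*m) (T*n)" using q unfolding Dset_def by auto
  have Kc: "th \<cdot>\<^sub>m snd p + (1 - th) \<cdot>\<^sub>m snd q \<in> carrier_mat (T*m) (T*n)" using K1 K2 by auto
  define c0 where "c0 = mat_trace ((Pmat n T * G0 A n T) * Sigma0 * transpose_mat (Pmat n T * G0 A n T))"
  define H where "H K = Pmat n T * (Gw A n T + Gu A B n m T * K)" for K
  define Q where "Q K i = quadf (Wbold W n T) (T*n) (\<lambda>k. H K $$ (i,k))" for K i
  have J: "\<And>K. K \<in> carrier_mat (T*m) (T*n) \<Longrightarrow> calJ1 A B Sigma0 W n m T K = c0 + (\<Sum>i<n. Q K i)"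
    unfolding c0_def Q_def H_def using calJ1_eq(2)[OF _ S0 Wc] by blast
  have le: "Q (th \<cdot>\<^sub>m snd p + (1 - th) \<cdot>\<^sub>m snd q) i \<le> th * Q (snd p) i + (1 - th) * Q (snd q) i"
    if i: "i < n" for i
  proof -
    have "Q (th \<cdot>\<^sub>m snd p + (1 - th) \<cdot>\<^sub>m snd q) i
       = quadf (Wbold W n T) (T*n) (\<lambda>k. th * H (snd p) $$ (i,k) + (1 - th) * H (snd q) $$ (i,k))"
      unfolding Q_def H_def
      by (intro quadf_cong affine_entry[OF carriers_std(4) carriers_std(3) carriers_std(2) K1 K2 i])
    also have "\<dots> \<le> th * Q (snd p) i + (1 - th) * Q (snd q) i"
      unfolding Q_def using th
      by (intro quadf_convex_le[OF W, where a="\<lambda>k. H (snd p) $$ (i,k)" and b="\<lambda>k. H (snd q) $$ (i,k)"]) auto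
    finally show ?thesis .
  qed
  have "calJ1 A B Sigma0 W n m T (th \<cdot>\<^sub>m snd p + (1 - th) \<cdot>\<^sub>m snd q)
      = c0 + (\<Sum>i<n. Q (th \<cdot>\<^sub>m snd p + (1 - th) \<cdot>\<^sub>m snd q) i)" by (rule J[OF Kc])
  also have "\<dots> \<le> c0 + (\<Sum>i<n. th * Q (snd p) i + (1 - th) * Q (snd q) i)"
    using le by (intro add_left_mono sum_mono) auto
  also have "(\<Sum>i<n. th * Q (snd p) i + (1 - th) * Q (snd q) i) = th * (\<Sum>i<n. Q (snd p) i) + (1 - th) * (\<Sum>i<n. Q (snd q) i)"
    by (simp add: sum.distrib sum_distrib_left)
  also have "c0 + (th * (\<Sum>i<n. Q (snd p) i) + (1 - th) * (\<Sum>i<n. Q (snd q) i))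
      = th * (c0 + (\<Sum>i<n. Q (snd p) i)) + (1 - th) * (c0 + (\<Sum>i<n. Q (snd q) i))"
    by (simp add: algebra_simps)
  also have "\<dots> = th * calJ1 A B Sigma0 W n m T (snd p) + (1 - th) * calJ1 A B Sigma0 W n m T (snd q)"
    using J[OF K1] J[OF K2] by simp
  finally show "calJ1 A B Sigma0 W n m T (th \<cdot>\<^sub>m snd p + (1 - th) \<cdot>\<^sub>m snd q)
      \<le> th * calJ1 A B Sigma0 W n m T (snd p) + (1 - th) * calJ1 A B Sigma0 W n m T (snd q)" .
qed

lemma D1_rewrite:
  assumes u: "u \<in> carrier_vec (T*m)" and K: "K \<in> carrier_mat (T*m) (T*n)"
  shows "u \<bullet> u + mat_trace (K * Wbold W n T * transpose_mat K)
     = (\<Sum>i<T*m. u $ i * u $ i) + (\<Sum>i<T*m. quadf (Wbold W n T) (T*n) (\<lambda>k. K $$ (i,k)))"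
  unfolding trace_quad[OF K carriers_std(5)] quadf_def using u
  by (simp add: scalar_prod_def lessThan_atLeast0)

lemma sq_convex_le: "0 \<le> th \<Longrightarrow> th \<le> 1 \<Longrightarrow>
   (th * a + (1 - th) * b) * (th * a + (1 - th) * b) \<le> th * (a * a) + (1 - th) * (b * b :: real)"
proof -
  assume th: "0 \<le> th" "th \<le> 1"
  have "th * (a * a) + (1 - th) * (b * b) - (th * a + (1 - th) * b) * (th * a + (1 - th) * b)
      = th * (1 - th) * ((a - b) * (a - b))" by (simp add: algebra_simps)
  moreover have "0 \<le> th * (1 - th) * ((a - b) * (a - b))" using th by simp
  ultimately show ?thesis by linarith
qed

lemma part_convex_pairs:
  assumes W: "sym_psd n W" and mu0: "mu0 \<in> carrier_vec n" and muf: "muf \<in> carrier_vec n"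
  shows "convex_pairs (D1set W rho n m T \<inter> D2set A B mu0 muf n m T)"
  unfolding convex_pairs_def
proof (intro ballI allI impI)
  fix p q and th :: real
  assume p: "p \<in> D1set W rho n m T \<inter> D2set A B mu0 muf n m T"
    and q: "q \<in> D1set W rho n m T \<inter> D2set A B mu0 muf n m T" and th: "0 \<le> th \<and> th \<le> 1"
  obtain u1 K1 where p': "p = (u1, K1)" by force
  obtain u2 K2 where q': "q = (u2, K2)" by force
  have pD: "(u1,K1) \<in> Dset n m T" and qD: "(u2,K2) \<in> Dset n m T"
    using p q p' q' unfolding D1set_def by auto
  have u1: "u1 \<in> carrier_vec (T*m)" and K1: "K1 \<in> carrier_mat (T*m) (T*n)"
    and z1: "\<And>i j. i < T*m \<Longrightarrow> j < T*n \<Longrightarrow> \<not> (j div n < i div m) \<Longrightarrow> K1 $$ (i,j) = 0"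
    using pD unfolding Dset_def by auto
  have u2: "u2 \<in> carrier_vec (T*m)" and K2: "K2 \<in> carrier_mat (T*m) (T*n)"
    and z2: "\<And>i j. i < T*m \<Longrightarrow> j < T*n \<Longrightarrow> \<not> (j div n < i div m) \<Longrightarrow> K2 $$ (i,j) = 0"
    using qD unfolding Dset_def by auto
  define u where "u = th \<cdot>\<^sub>v u1 + (1 - th) \<cdot>\<^sub>v u2"
  define K where "K = th \<cdot>\<^sub>m K1 + (1 - th) \<cdot>\<^sub>m K2"
  have u: "u \<in> carrier_vec (T*m)" unfolding u_def using u1 u2 by auto
  have K: "K \<in> carrier_mat (T*m) (T*n)" unfolding K_def using K1 K2 by auto
  have uK: "\<And>i. i < T*m \<Longrightarrow> u $ i = th * u1 $ i + (1 - th) * u2 $ i" unfolding u_def using u1 u2 by auto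
  have KK: "\<And>i k. i < T*m \<Longrightarrow> k < T*n \<Longrightarrow> K $$ (i,k) = th * K1 $$ (i,k) + (1 - th) * K2 $$ (i,k)"
    unfolding K_def using K1 K2 by auto
  have D: "(u, K) \<in> Dset n m T" unfolding Dset_def using u K KK z1 z2 by auto
  have g1: "u1 \<bullet> u1 + mat_trace (K1 * Wbold W n T * transpose_mat K1) - rho^2 \<le> 0"
    using p p' unfolding D1set_def by auto
  have g2: "u2 \<bullet> u2 + mat_trace (K2 * Wbold W n T * transpose_mat K2) - rho^2 \<le> 0"
    using q q' unfolding D1set_def by auto
  have "u \<bullet> u + mat_trace (K * Wbold W n T * transpose_mat K)
     = (\<Sum>i<T*m. u $ i * u $ i) + (\<Sum>i<T*m. quadf (Wbold W n T) (T*n) (\<lambda>k. K $$ (i,k)))"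
    by (rule D1_rewrite[OF u K])
  also have "\<dots> \<le> (\<Sum>i<T*m. th * (u1 $ i * u1 $ i) + (1 - th) * (u2 $ i * u2 $ i))
      + (\<Sum>i<T*m. th * quadf (Wbold W n T) (T*n) (\<lambda>k. K1 $$ (i,k)) + (1 - th) * quadf (Wbold W n T) (T*n) (\<lambda>k. K2 $$ (i,k)))"
  proof (intro add_mono sum_mono)
    fix i assume "i \<in> {..<T*m}"
    then have i: "i < T*m" by simp
    show "u $ i * u $ i \<le> th * (u1 $ i * u1 $ i) + (1 - th) * (u2 $ i * u2 $ i)"
      unfolding uK[OF i] using th sq_convex_le by blast
    have "quadf (Wbold W n T) (T*n) (\<lambda>k. K $$ (i,k))
        = quadf (Wbold W n T) (T*n) (\<lambda>k. th * K1 $$ (i,k) + (1 - th) * K2 $$ (i,k))"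
      using KK[OF i] by (intro quadf_cong) auto
    also have "\<dots> \<le> th * quadf (Wbold W n T) (T*n) (\<lambda>k. K1 $$ (i,k)) + (1 - th) * quadf (Wbold W n T) (T*n) (\<lambda>k. K2 $$ (i,k))"
      using th by (intro quadf_convex_le[OF W, where a="\<lambda>k. K1 $$ (i,k)" and b="\<lambda>k. K2 $$ (i,k)"]) auto
    finally show "quadf (Wbold W n T) (T*n) (\<lambda>k. K $$ (i,k))
        \<le> th * quadf (Wbold W n T) (T*n) (\<lambda>k. K1 $$ (i,k)) + (1 - th) * quadf (Wbold W n T) (T*n) (\<lambda>k. K2 $$ (i,k))" .
  qed
  also have "\<dots> = th * (u1 \<bullet> u1 + mat_trace (K1 * Wbold W n T * transpose_mat K1))
      + (1 - th) * (u2 \<bullet> u2 + mat_trace (K2 * Wbold W n T * transpose_mat K2))"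
  proof -
    have s1: "(\<Sum>i<T*m. th * (u1 $ i * u1 $ i) + (1 - th) * (u2 $ i * u2 $ i))
      = th * (\<Sum>i<T*m. u1 $ i * u1 $ i) + (1 - th) * (\<Sum>i<T*m. u2 $ i * u2 $ i)"
      by (simp add: sum.distrib sum_distrib_left)
    have s2: "(\<Sum>i<T*m. th * quadf (Wbold W n T) (T*n) (\<lambda>k. K1 $$ (i,k)) + (1 - th) * quadf (Wbold W n T) (T*n) (\<lambda>k. K2 $$ (i,k)))
      = th * (\<Sum>i<T*m. quadf (Wbold W n T) (T*n) (\<lambda>k. K1 $$ (i,k))) + (1 - th) * (\<Sum>i<T*m. quadf (Wbold W n T) (T*n) (\<lambda>k. K2 $$ (i,k)))"
      by (simp add: sum.distrib sum_distrib_left)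
    show ?thesis unfolding D1_rewrite[OF u1 K1] D1_rewrite[OF u2 K2] s1 s2
      by (simp add: algebra_simps)
  qed
  also have "\<dots> \<le> th * rho^2 + (1 - th) * rho^2"
    using g1 g2 th by (intro add_mono mult_left_mono) auto
  finally have G: "u \<bullet> u + mat_trace (K * Wbold W n T * transpose_mat K) - rho^2 \<le> 0"
    by (simp add: algebra_simps)
  have Pc: "\<And>v. v \<in> carrier_vec (T*m) \<Longrightarrow> Pmat n T *\<^sub>v (Gu A B n m T *\<^sub>v v + G0 A n T *\<^sub>v mu0) \<in> carrier_vec n"
    using carriers_std mu0 by (metis add_carrier_vec mult_mat_vec_carrier)
  have e1: "Pmat n T *\<^sub>v (Gu A B n m T *\<^sub>v u1 + G0 A n T *\<^sub>v mu0) = muf"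
    using p p' vec_minus_zero_iff[OF Pc[OF u1] muf] unfolding D2set_def by auto
  have e2: "Pmat n T *\<^sub>v (Gu A B n m T *\<^sub>v u2 + G0 A n T *\<^sub>v mu0) = muf"
    using q q' vec_minus_zero_iff[OF Pc[OF u2] muf] unfolding D2set_def by auto
  have "Pmat n T *\<^sub>v (Gu A B n m T *\<^sub>v u + G0 A n T *\<^sub>v mu0) = muf"
  proof (rule eq_vecI)
    fix i assume "i < dim_vec muf"
    then have i: "i < n" using muf by simp
    have c: "G0 A n T *\<^sub>v mu0 \<in> carrier_vec ((T+1)*n)"
      by (rule mult_mat_vec_carrier[OF carriers_std(1) mu0])
    show "(Pmat n T *\<^sub>v (Gu A B n m T *\<^sub>v u + G0 A n T *\<^sub>v mu0)) $ i = muf $ i"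
      unfolding u_def affine_vec_entry[OF carriers_std(4) carriers_std(2) c u1 u2 i] e1 e2
      by (simp add: algebra_simps)
  qed (use muf in \<open>simp add: Pmat_def\<close>)
  then have "(u, K) \<in> D2set A B mu0 muf n m T"
    unfolding D2set_def using D vec_minus_zero_iff[OF Pc[OF u] muf] by auto
  moreover have "(u, K) \<in> D1set W rho n m T" unfolding D1set_def using D G by auto
  ultimately show "(th \<cdot>\<^sub>v fst p + (1 - th) \<cdot>\<^sub>v fst q, th \<cdot>\<^sub>m snd p + (1 - th) \<cdot>\<^sub>m snd q)
      \<in> D1set W rho n m T \<inter> D2set A B mu0 muf n m T"
    unfolding p' q' u_def K_def by simp
qed

theorem theorem1:
  fixes M :: "'a measure"
    and n m T :: nat
    and A B :: "nat \<Rightarrow> real mat"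
    and Sigma0 W :: "real mat"
    and mu0 muf :: "real vec"
    and rho :: real
    and x0 :: "'a \<Rightarrow> real vec"
    and w :: "nat \<Rightarrow> 'a \<Rightarrow> real vec"
  assumes M: "prob_space M"
    and T: "0 < T"
    and rho: "0 < rho"
    and AB: "\<And>t. t < T \<Longrightarrow> A t \<in> carrier_mat n n \<and> B t \<in> carrier_mat n m"
    and mu: "mu0 \<in> carrier_vec n" "muf \<in> carrier_vec n"
    and Sigma0: "sym_posdef n Sigma0"
    and W: "sym_psd n W"
    and x0_dim: "\<And>\<omega>. \<omega> \<in> space M \<Longrightarrow> x0 \<omega> \<in> carrier_vec n"
    and w_dim: "\<And>t \<omega>. t < T \<Longrightarrow> \<omega> \<in> space M \<Longrightarrow> w t \<omega> \<in> carrier_vec n"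
    and x0_meas: "\<And>i. i < n \<Longrightarrow> (\<lambda>\<omega>. vec_index (x0 \<omega>) i) \<in> borel_measurable M"
    and w_meas: "\<And>t i. t < T \<Longrightarrow> i < n \<Longrightarrow> (\<lambda>\<omega>. vec_index (w t \<omega>) i) \<in> borel_measurable M"
    and x0_L2: "\<And>i. i < n \<Longrightarrow> integrable M (\<lambda>\<omega>. (vec_index (x0 \<omega>) i)^2)"
    and w_L2: "\<And>t i. t < T \<Longrightarrow> i < n \<Longrightarrow> integrable M (\<lambda>\<omega>. (vec_index (w t \<omega>) i)^2)"
    and x0_mean: "mean_vec M n x0 = mu0"
    and x0_cov: "cov_mat M n x0 = Sigma0"
    and w_mean: "\<And>t. t < T \<Longrightarrow> mean_vec M n (w t) = 0\<^sub>v n"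
    and w_cov: "\<And>t s. t < T \<Longrightarrow> s < T \<Longrightarrow>
                   cross_mat M n (w t) (w s) = (if t = s then W else 0\<^sub>m n n)"
    and x0_w: "\<And>t. t < T \<Longrightarrow> cross_mat M n x0 (w t) = 0\<^sub>m n n"
  shows
    "(\<forall>Ubar K. valid_params n m T Ubar K \<longrightarrow>
        (stack_u Ubar m T, stack_K K n m T) \<in> Dset n m T \<and>
        mat_trace (cov_mat M n (traj A B m Ubar K x0 w T))
          = calJ1 A B Sigma0 W n m T (stack_K K n m T) \<and>
        (((\<integral>\<omega>. (\<Sum>t<T. scalar_prod (ctrl m Ubar K w t \<omega>) (ctrl m Ubar K w t \<omega>)) \<partial>M) - rho^2 \<le> 0
            \<and> mean_vec M n (traj A B m Ubar K x0 w T) = muf)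
          \<longleftrightarrow> (stack_u Ubar m T, stack_K K n m T)
                \<in> D1set W rho n m T \<inter> D2set A B mu0 muf n m T) \<and>
        ((\<integral>\<omega>. (\<Sum>t<T. scalar_prod (ctrl m Ubar K w t \<omega>) (ctrl m Ubar K w t \<omega>)) \<partial>M) - rho^2 \<le> 0
          \<longleftrightarrow> (stack_u Ubar m T, stack_K K n m T) \<in> D1set W rho n m T) \<and>
        (mean_vec M n (traj A B m Ubar K x0 w T) = muf
          \<longleftrightarrow> (stack_u Ubar m T, stack_K K n m T) \<in> D2set A B mu0 muf n m T))
     \<and> (\<forall>p \<in> Dset n m T. \<exists>Ubar K. valid_params n m T Ubar K \<and>
          p = (stack_u Ubar m T, stack_K K n m T))
     \<and> convex_obj (Dset n m T) (calJ1 A B Sigma0 W n m T)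
     \<and> convex_pairs (D1set W rho n m T \<inter> D2set A B mu0 muf n m T)"
proof -
  interpret P: prob_space M by (rule M)
  have Wc: "W \<in> carrier_mat n n" using W unfolding sym_psd_def by auto
  have S0c: "Sigma0 \<in> carrier_mat n n" using Sigma0 unfolding sym_posdef_def by auto
  note wf0 = P.ws_facts[where T=T, OF Wc w_dim x0_meas w_meas x0_L2 w_L2 x0_mean w_mean w_cov x0_w]
  have wf1: "\<And>k. k < n \<Longrightarrow> L2 M (\<lambda>\<omega>. x0 \<omega> $ k)" using wf0(1) by blast
  have wf2: "\<And>q. q < T*n \<Longrightarrow> L2 M (\<lambda>\<omega>. wstack n T w \<omega> $ q)" using wf0(2) by blast
  have wf3: "mean_vec M (T*n) (wstack n T w) = 0\<^sub>v (T*n)" using wf0(3) by blast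
  have wf4: "cov_mat M (T*n) (wstack n T w) = Wbold W n T" using wf0(4) by blast
  have wf5: "\<And>k l. k < n \<Longrightarrow> l < T*n \<Longrightarrow>
          (\<integral>\<omega>. (x0 \<omega> $ k - mu0 $ k) * (wstack n T w \<omega> $ l - 0\<^sub>v (T*n) $ l) \<partial>M) = 0"
    using wf0(5) by blast
  note wf = wf1 wf2 wf3 wf4 wf5
  have wsd: "\<And>\<omega>. \<omega> \<in> space M \<Longrightarrow> wstack n T w \<omega> \<in> carrier_vec (T*n)" by (rule carriers_std(8))
  have main: "(stack_u Ubar m T, stack_K K n m T) \<in> Dset n m T \<and>
        mat_trace (cov_mat M n (traj A B m Ubar K x0 w T))
          = calJ1 A B Sigma0 W n m T (stack_K K n m T) \<and>
        (((\<integral>\<omega>. (\<Sum>t<T. scalar_prod (ctrl m Ubar K w t \<omega>) (ctrl m Ubar K w t \<omega>)) \<partial>M) - rho^2 \<le> 0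
            \<and> mean_vec M n (traj A B m Ubar K x0 w T) = muf)
          \<longleftrightarrow> (stack_u Ubar m T, stack_K K n m T)
                \<in> D1set W rho n m T \<inter> D2set A B mu0 muf n m T) \<and>
        ((\<integral>\<omega>. (\<Sum>t<T. scalar_prod (ctrl m Ubar K w t \<omega>) (ctrl m Ubar K w t \<omega>)) \<partial>M) - rho^2 \<le> 0
          \<longleftrightarrow> (stack_u Ubar m T, stack_K K n m T) \<in> D1set W rho n m T) \<and>
        (mean_vec M n (traj A B m Ubar K x0 w T) = muf
          \<longleftrightarrow> (stack_u Ubar m T, stack_K K n m T) \<in> D2set A B mu0 muf n m T)"
    if v: "valid_params n m T Ubar K" for Ubar K
  proof -
    define ub where "ub = stack_u Ubar m T"
    define cK where "cK = stack_K K n m T"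
    define ws where "ws = wstack n T w"
    have ub: "ub \<in> carrier_vec (T*m)" and cK: "cK \<in> carrier_mat (T*m) (T*n)"
      unfolding ub_def cK_def by (rule carriers_std(6), rule carriers_std(7))
    have D: "(ub, cK) \<in> Dset n m T"
      unfolding Dset_def using ub cK by (auto simp: cK_def stack_K_def)
    define L1 where "L1 = Pmat n T * G0 A n T"
    define L2m where "L2m = Pmat n T * (Gw A n T + Gu A B n m T * cK)"
    define d where "d = Pmat n T *\<^sub>v (Gu A B n m T *\<^sub>v ub)"
    have H: "Gw A n T + Gu A B n m T * cK \<in> carrier_mat ((T+1)*n) (T*n)"
      by (rule add_carrier_mat[OF mult_carrier_mat[OF carriers_std(2)[of A B n m T] cK]])
    have L1c: "L1 \<in> carrier_mat n n" unfolding L1_def by (rule mult_carrier_mat[OF carriers_std(4) carriers_std(1)])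
    have L2c: "L2m \<in> carrier_mat n (T*n)" unfolding L2m_def by (rule mult_carrier_mat[OF carriers_std(4) H])
    have dc: "d \<in> carrier_vec n" unfolding d_def
      by (rule mult_mat_vec_carrier[OF carriers_std(4) mult_mat_vec_carrier[OF carriers_std(2) ub]])
    have Xeq: "traj A B m Ubar K x0 w T \<omega> = d + L1 *\<^sub>v x0 \<omega> + L2m *\<^sub>v ws \<omega>" if om: "\<omega> \<in> space M" for \<omega>
    proof -
      have "traj A B m Ubar K x0 w T \<omega> = Pmat n T *\<^sub>v (G0 A n T *\<^sub>v x0 \<omega>
         + Gu A B n m T *\<^sub>v (ub + cK *\<^sub>v ws \<omega>) + Gw A n T *\<^sub>v ws \<omega>)"
        unfolding ub_def cK_def ws_def
        by (rule traj_stack[of T A n B m x0 \<omega> w Ubar K, OF AB x0_dim[OF om] w_dim[OF _ om] v])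
      also have "\<dots> = d + L1 *\<^sub>v x0 \<omega> + L2m *\<^sub>v ws \<omega>"
        unfolding d_def L1_def L2m_def
        by (rule alg1[OF carriers_std(4) carriers_std(1) carriers_std(2) carriers_std(3) cK x0_dim[OF om] ub])
          (simp add: ws_def wsd[OF om])
      finally show ?thesis .
    qed
    note am = P.affine_moments[OF x0_dim wsd wf(1) wf(2) x0_mean wf(3) x0_cov wf(4) wf(5) L1c L2c dc Xeq[unfolded ws_def]]
    have mT: "mean_vec M n (traj A B m Ubar K x0 w T) = Pmat n T *\<^sub>v (Gu A B n m T *\<^sub>v ub + G0 A n T *\<^sub>v mu0)"
    proof -
      have "mean_vec M n (traj A B m Ubar K x0 w T) = d + L1 *\<^sub>v mu0 + L2m *\<^sub>v 0\<^sub>v (T*n)" using am(1) by simp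
      also have "L2m *\<^sub>v 0\<^sub>v (T*n) = 0\<^sub>v n" by (rule mv_zero_r[OF L2c])
      also have "L1 *\<^sub>v mu0 = Pmat n T *\<^sub>v (G0 A n T *\<^sub>v mu0)"
        unfolding L1_def using carriers_std(4) carriers_std(1) mu(1) by (rule assoc_mult_mat_vec)
      also have "d + Pmat n T *\<^sub>v (G0 A n T *\<^sub>v mu0) + 0\<^sub>v n = Pmat n T *\<^sub>v (Gu A B n m T *\<^sub>v ub + G0 A n T *\<^sub>v mu0)"
      proof -
        have g1: "Gu A B n m T *\<^sub>v ub \<in> carrier_vec ((T+1)*n)" by (rule mult_mat_vec_carrier[OF carriers_std(2) ub])
        have g2: "G0 A n T *\<^sub>v mu0 \<in> carrier_vec ((T+1)*n)" by (rule mult_mat_vec_carrier[OF carriers_std(1) mu(1)])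
        have c1: "Pmat n T *\<^sub>v (Gu A B n m T *\<^sub>v ub) \<in> carrier_vec n" by (rule mult_mat_vec_carrier[OF carriers_std(4) g1])
        have c2: "Pmat n T *\<^sub>v (G0 A n T *\<^sub>v mu0) \<in> carrier_vec n" by (rule mult_mat_vec_carrier[OF carriers_std(4) g2])
        show ?thesis unfolding d_def mult_add_distrib_mat_vec[OF carriers_std(4) g1 g2]
          by (rule right_zero_vec[OF add_carrier_vec[OF c1 c2]])
      qed
      finally show ?thesis .
    qed
    have mTc: "Pmat n T *\<^sub>v (Gu A B n m T *\<^sub>v ub + G0 A n T *\<^sub>v mu0) \<in> carrier_vec n"
      using carriers_std mu(1) ub by (metis add_carrier_vec mult_mat_vec_carrier)
    have cov: "mat_trace (cov_mat M n (traj A B m Ubar K x0 w T)) = calJ1 A B Sigma0 W n m T cK"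
    proof -
      have "cov_mat M n (traj A B m Ubar K x0 w T) = L1 * Sigma0 * transpose_mat L1 + L2m * Wbold W n T * transpose_mat L2m"
        using am(2) by simp
      then show ?thesis unfolding calJ1_def calJ1_eq(1)[OF cK S0c Wc] L1_def L2m_def by simp
    qed
    define us where "us \<omega> = ub + cK *\<^sub>v ws \<omega>" for \<omega>
    have Ueq: "us \<omega> = ub + cK *\<^sub>v ws \<omega> + 0\<^sub>m (T*m) n *\<^sub>v x0 \<omega>" if om: "\<omega> \<in> space M" for \<omega>
      unfolding us_def using mv_zero_l[OF x0_dim[OF om], of "T*m"] cK ub wsd[OF om, folded ws_def]
      by simp
    have cr2: "(\<integral>\<omega>. (ws \<omega> $ k - 0\<^sub>v (T*n) $ k) * (x0 \<omega> $ l - mu0 $ l) \<partial>M) = 0"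
      if "k < T*n" "l < n" for k l
      using wf(5)[OF that(2) that(1)] unfolding ws_def by (simp add: mult.commute)
    note am2 = P.affine_moments[OF wsd[folded ws_def] x0_dim wf(2)[folded ws_def] wf(1) wf(3)[folded ws_def] x0_mean
        wf(4)[folded ws_def] x0_cov cr2 cK zero_carrier_mat ub Ueq]
    have usL: "L2 M (\<lambda>\<omega>. us \<omega> $ q)" if "q < T*m" for q using am2(3) that by blast
    have Eus: "(\<integral>\<omega>. (\<Sum>t<T. ctrl m Ubar K w t \<omega> \<bullet> ctrl m Ubar K w t \<omega>) \<partial>M) = (\<Sum>q<T*m. \<integral>\<omega>. (us \<omega> $ q)^2 \<partial>M)"
    proof -
      have "(\<integral>\<omega>. (\<Sum>t<T. ctrl m Ubar K w t \<omega> \<bullet> ctrl m Ubar K w t \<omega>) \<partial>M) = (\<integral>\<omega>. (\<Sum>q<T*m. (us \<omega> $ q)^2) \<partial>M)"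
      proof (rule Bochner_Integration.integral_cong[OF refl])
        fix \<omega> assume om: "\<omega> \<in> space M"
        have "us \<omega> \<in> carrier_vec (T*m)" unfolding us_def using ub cK wsd[OF om, folded ws_def] by auto
        then show "(\<Sum>t<T. ctrl m Ubar K w t \<omega> \<bullet> ctrl m Ubar K w t \<omega>) = (\<Sum>q<T*m. (us \<omega> $ q)^2)"
        proof -
          have e: "(\<Sum>t<T. ctrl m Ubar K w t \<omega> \<bullet> ctrl m Ubar K w t \<omega>) = us \<omega> \<bullet> us \<omega>"
            unfolding us_def ub_def cK_def ws_def
            by (rule energy_stack[of n m T Ubar K w \<omega>, OF v]) (use w_dim[OF _ om] in auto)
          show ?thesis unfolding e using \<open>us \<omega> \<in> carrier_vec (T*m)\<close>
            by (simp add: scalar_prod_def lessThan_atLeast0 power2_eq_square)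
        qed
      qed
      also have "\<dots> = (\<Sum>q<T*m. \<integral>\<omega>. (us \<omega> $ q)^2 \<partial>M)"
        using usL unfolding L2_def by (intro Bochner_Integration.integral_sum) auto
      finally show ?thesis .
    qed
    have mU: "mean_vec M (T*m) us = ub"
      using am2(1) mv_zero_r[OF cK] mv_zero_l[OF mu(1), of "T*m"] ub by simp
    have cU: "cov_mat M (T*m) us = cK * Wbold W n T * transpose_mat cK"
    proof -
      have "0\<^sub>m (T*m) n * Sigma0 * transpose_mat (0\<^sub>m (T*m) n) = 0\<^sub>m (T*m) (T*m)"
        using S0c by simp
      then show ?thesis using am2(2) cK carriers_std(5)[of W n T] by simp
    qed
    have E: "(\<integral>\<omega>. (\<Sum>t<T. ctrl m Ubar K w t \<omega> \<bullet> ctrl m Ubar K w t \<omega>) \<partial>M)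
        = ub \<bullet> ub + mat_trace (cK * Wbold W n T * transpose_mat cK)"
    proof -
      have "(\<Sum>q<T*m. \<integral>\<omega>. (us \<omega> $ q)^2 \<partial>M) = mat_trace (cov_mat M (T*m) us) + mean_vec M (T*m) us \<bullet> mean_vec M (T*m) us"
        by (rule P.sum_second_moment, rule usL)
      then show ?thesis unfolding Eus mU cU by simp
    qed
    have d1: "((\<integral>\<omega>. (\<Sum>t<T. ctrl m Ubar K w t \<omega> \<bullet> ctrl m Ubar K w t \<omega>) \<partial>M) - rho^2 \<le> 0)
        \<longleftrightarrow> (ub, cK) \<in> D1set W rho n m T"
      unfolding E D1set_def using D by auto
    have d2: "(mean_vec M n (traj A B m Ubar K x0 w T) = muf) \<longleftrightarrow> (ub, cK) \<in> D2set A B mu0 muf n m T"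
      unfolding mT D2set_def using D vec_minus_zero_iff[OF mTc mu(2)] by auto
    show ?thesis using D cov d1 d2 unfolding ub_def cK_def by blast
  qed
  show ?thesis using main part_surj part_convex_obj[OF W S0c] part_convex_pairs[OF W mu] by blast
qed

end
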